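(* Let $(\mathbf C,I)$ be a finite-type based chain complex of real inner product spaces, let $M$ be a Morse matching on it, and let $\Phi=\Phi^M:\mathbf C^M\to\mathbf C$, $\Psi=\Psi^M:\mathbf C\to\mathbf C^M$ be the associated Morse retraction. Fix $n$. Then the following two conditions (1) $\mathrm{Proj}_{\operatorname{Ker}\partial_{n+1}^\dagger}(\Phi\Psi s-s)=0$ for all $s\in\mathbf C_n$, and (2) $\mathrm{Proj}_{\operatorname{Ker}\partial_{n-1}}(\Psi^\dagger\Phi^\dagger s-s)=0$ for all $s\in\mathbf C_{n-1}$ hold if and only if $M$ is $(n,n-1)$-free.
   Context: A finite-type based chain complex of real inner product spaces is a chain complex $(\mathbf C,\partial)$ of finite-dimensional real inner product spaces $\mathbf C_n$, $n\ge0$, with pairwise disjoint finite index sets $I=\{I_n\}$ and a direct sum decomposition $\mathbf C_n=\bigoplus_{\alpha\in I_n}C_\alpha$ (summands not necessarily orthogonal); elements of $I_n$ are $n$-cells. $\partial_{\beta,\alpha}=\pi_\beta\circ\partial_n\circ i_\alpha:C_\alpha\to C_\beta$ for $\alpha\in I_n,\beta\in I_{n-1}$ ($i_\alpha$ inclusion, $\pi_\beta$ projection along the other summands). $\dagger$ denotes the adjoint with respect to the inner products (on $\mathbf C^M$ the restricted inner product is used), and $\mathrm{Proj}_W$ is orthogonal projection onto $W$. The graph $\mathcal G(\mathbf C)$ has vertices $\bigcup I_n$ and edges $\alpha\to\beta$ when $\partial_{\beta,\alpha}\neq0$. A Morse matching is a set $M$ of edges with: each vertex on at most one edge of $M$;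 $\partial_{\beta,\alpha}$ an isomorphism for each $\alpha\to\beta\in M$; for each $n$, "there is a directed path from $\alpha$ to $\beta$ in $\mathcal G(\mathbf C)^M$ (edges of $M$ reversed)" is a partial order on $I_n$. $M$ is $(n,n-1)$-free if no edge of $M$ joins an $n$-cell to an $(n-1)$-cell. $M^0$ is the set of unmatched cells. For a directed path in $\mathcal G(\mathbf C)^M$ its index is the composite of $\partial_{\sigma_{i+1},\sigma_i}$ for ordinary steps and $-\partial_{\sigma_i,\sigma_{i+1}}^{-1}$ for reversed matched edges (trivial path: identity); $\Gamma_{\beta,\alpha}$ is the sum of indices of all paths from $\alpha$ to $\beta$. Morse complex: $\mathbf C^M_n=\bigoplus_{\alpha\in I_n\cap M^0}C_\alpha$, boundary $x\mapsto\sum_{\beta\in M^0\cap I_{n-1}}\Gamma_{\beta,\alpha}(x)$. Morse retraction: $\Phi^M(x)=\sum_{\beta\in I_n}\Gamma_{\beta,\alpha}(x)$ for $x\in C_\alpha$, $\alpha\in M^0\cap I_n$; $\Psi^M(x)=\sum_{\beta\in M^0\cap I_n}\Gamma_{\beta,\alpha}(x)$ for $x\in C_\alpha$, $\alpha\in I_n$; homotopy $h(x)=\sum_{\beta\in I_{n+1}}\Gamma_{\beta,\alpha}(x)$. *)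

theory Defs
  imports "HOL-Analysis.Analysis"
begin

text \<open>Encoding: cells have type 'c; I n is the (finite) set of n-cells.
  All summands C alpha live in one ambient real inner product space 'v;
  the n-chains C_n are the (direct) sums of the C alpha, alpha in I n, with the
  inner product of 'v restricted to C_n.  Only level-wise inner products are
  ever used.\<close>

definition chains :: "(nat \<Rightarrow> 'c set) \<Rightarrow> ('c \<Rightarrow> 'v::real_vector set) \<Rightarrow> nat \<Rightarrow> 'v set" where
  "chains I C n = {sum f (I n) | f. \<forall>\<alpha>\<in>I n. f \<alpha> \<in> C \<alpha>}"

definition fin_based_complex ::
  "(nat \<Rightarrow> 'c set) \<Rightarrow> ('c \<Rightarrow> 'v::real_inner set) \<Rightarrow> ('v \<Rightarrow> 'v) \<Rightarrow> bool" where
  "fin_based_complex I C d \<longleftrightarrow>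
     (\<forall>n. finite (I n)) \<and>
     (\<forall>n m. n \<noteq> m \<longrightarrow> I n \<inter> I m = {}) \<and>
     (\<forall>\<alpha>. \<exists>B. finite B \<and> C \<alpha> = span B) \<and>
     (\<forall>n f. (\<forall>\<alpha>\<in>I n. f \<alpha> \<in> C \<alpha>) \<and> sum f (I n) = 0 \<longrightarrow> (\<forall>\<alpha>\<in>I n. f \<alpha> = 0)) \<and>
     (\<forall>n. \<forall>x\<in>chains I C n. \<forall>y\<in>chains I C n. d (x + y) = d x + d y) \<and>
     (\<forall>n c. \<forall>x\<in>chains I C n. d (c *\<^sub>R x) = c *\<^sub>R d x) \<and>
     (\<forall>n. \<forall>x\<in>chains I C (Suc n). d x \<in> chains I C n) \<and>
     (\<forall>x\<in>chains I C 0. d x = 0) \<and>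
     (\<forall>n. \<forall>x\<in>chains I C n. d (d x) = 0)"

definition deg :: "(nat \<Rightarrow> 'c set) \<Rightarrow> 'c \<Rightarrow> nat" where
  "deg I \<alpha> = (THE n. \<alpha> \<in> I n)"

text \<open>pi_beta: the beta-component of an n-chain (projection along the other summands).\<close>
definition comp :: "(nat \<Rightarrow> 'c set) \<Rightarrow> ('c \<Rightarrow> 'v::real_vector set) \<Rightarrow> nat \<Rightarrow> 'c \<Rightarrow> 'v \<Rightarrow> 'v" where
  "comp I C n \<beta> x =
     (THE f. (\<forall>\<gamma>\<in>I n. f \<gamma> \<in> C \<gamma>) \<and> (\<forall>\<gamma>. \<gamma> \<notin> I n \<longrightarrow> f \<gamma> = 0) \<and> sum f (I n) = x) \<beta>"

text \<open>The block partial_{beta,alpha} = pi_beta o d o i_alpha : C alpha \<rightarrow> C beta.\<close>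
definition blk :: "(nat \<Rightarrow> 'c set) \<Rightarrow> ('c \<Rightarrow> 'v::real_vector set) \<Rightarrow> ('v \<Rightarrow> 'v) \<Rightarrow> 'c \<Rightarrow> 'c \<Rightarrow> 'v \<Rightarrow> 'v" where
  "blk I C d \<beta> \<alpha> x = comp I C (deg I \<beta>) \<beta> (d x)"

definition blk_inv :: "(nat \<Rightarrow> 'c set) \<Rightarrow> ('c \<Rightarrow> 'v::real_vector set) \<Rightarrow> ('v \<Rightarrow> 'v) \<Rightarrow> 'c \<Rightarrow> 'c \<Rightarrow> 'v \<Rightarrow> 'v" where
  "blk_inv I C d \<beta> \<alpha> y = (THE x. x \<in> C \<alpha> \<and> blk I C d \<beta> \<alpha> x = y)"

definition edges :: "(nat \<Rightarrow> 'c set) \<Rightarrow> ('c \<Rightarrow> 'v::real_vector set) \<Rightarrow> ('v \<Rightarrow> 'v) \<Rightarrow> ('c \<times> 'c) set" where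
  "edges I C d = {(\<alpha>, \<beta>). \<exists>k. \<alpha> \<in> I (Suc k) \<and> \<beta> \<in> I k \<and> (\<exists>x\<in>C \<alpha>. blk I C d \<beta> \<alpha> x \<noteq> 0)}"

definition medges :: "(nat \<Rightarrow> 'c set) \<Rightarrow> ('c \<Rightarrow> 'v::real_vector set) \<Rightarrow> ('v \<Rightarrow> 'v) \<Rightarrow> ('c \<times> 'c) set \<Rightarrow> ('c \<times> 'c) set" where
  "medges I C d M = (edges I C d - M) \<union> M\<inverse>"

definition mpaths :: "(nat \<Rightarrow> 'c set) \<Rightarrow> ('c \<Rightarrow> 'v::real_vector set) \<Rightarrow> ('v \<Rightarrow> 'v) \<Rightarrow> ('c \<times> 'c) set \<Rightarrow> 'c \<Rightarrow> 'c \<Rightarrow> 'c list set" where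
  "mpaths I C d M \<alpha> \<beta> = {p. p \<noteq> [] \<and> hd p = \<alpha> \<and> last p = \<beta> \<and>
      (\<forall>i. Suc i < length p \<longrightarrow> (p ! i, p ! Suc i) \<in> medges I C d M)}"

definition mstep :: "(nat \<Rightarrow> 'c set) \<Rightarrow> ('c \<Rightarrow> 'v::real_vector set) \<Rightarrow> ('v \<Rightarrow> 'v) \<Rightarrow> ('c \<times> 'c) set \<Rightarrow> 'c \<Rightarrow> 'c \<Rightarrow> 'v \<Rightarrow> 'v" where
  "mstep I C d M a b x = (if (b, a) \<in> M then - blk_inv I C d a b x else blk I C d b a x)"

fun pidx :: "('c \<Rightarrow> 'c \<Rightarrow> 'v \<Rightarrow> 'v) \<Rightarrow> 'c list \<Rightarrow> 'v \<Rightarrow> 'v" where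
  "pidx st [] x = x"
| "pidx st [a] x = x"
| "pidx st (a # b # p) x = pidx st (b # p) (st a b x)"

definition Gamma :: "(nat \<Rightarrow> 'c set) \<Rightarrow> ('c \<Rightarrow> 'v::real_vector set) \<Rightarrow> ('v \<Rightarrow> 'v) \<Rightarrow> ('c \<times> 'c) set \<Rightarrow> 'c \<Rightarrow> 'c \<Rightarrow> 'v \<Rightarrow> 'v" where
  "Gamma I C d M \<beta> \<alpha> x = (\<Sum>p\<in>mpaths I C d M \<alpha> \<beta>. pidx (mstep I C d M) p x)"

definition unmatched :: "('c \<times> 'c) set \<Rightarrow> 'c set" where
  "unmatched M = {\<alpha>. \<alpha> \<notin> Domain M \<and> \<alpha> \<notin> Range M}"

definition morse_matching ::
  "(nat \<Rightarrow> 'c set) \<Rightarrow> ('c \<Rightarrow> 'v::real_vector set) \<Rightarrow> ('v \<Rightarrow> 'v) \<Rightarrow> ('c \<times> 'c) set \<Rightarrow> bool" where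
  "morse_matching I C d M \<longleftrightarrow>
     M \<subseteq> edges I C d \<and>
     (\<forall>e\<in>M. \<forall>e'\<in>M. e \<noteq> e' \<longrightarrow> {fst e, snd e} \<inter> {fst e', snd e'} = {}) \<and>
     (\<forall>(\<alpha>, \<beta>)\<in>M. bij_betw (blk I C d \<beta> \<alpha>) (C \<alpha>) (C \<beta>)) \<and>
     (\<forall>n. partial_order_on (I n) {(\<alpha>, \<beta>). \<alpha> \<in> I n \<and> \<beta> \<in> I n \<and> mpaths I C d M \<alpha> \<beta> \<noteq> {}})"

definition mchains :: "(nat \<Rightarrow> 'c set) \<Rightarrow> ('c \<Rightarrow> 'v::real_vector set) \<Rightarrow> ('c \<times> 'c) set \<Rightarrow> nat \<Rightarrow> 'v set" where
  "mchains I C M n = chains (\<lambda>k. I k \<inter> unmatched M) C n"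

definition Phi :: "(nat \<Rightarrow> 'c set) \<Rightarrow> ('c \<Rightarrow> 'v::real_vector set) \<Rightarrow> ('v \<Rightarrow> 'v) \<Rightarrow> ('c \<times> 'c) set \<Rightarrow> nat \<Rightarrow> 'v \<Rightarrow> 'v" where
  "Phi I C d M n x = (\<Sum>\<alpha>\<in>I n \<inter> unmatched M. \<Sum>\<beta>\<in>I n. Gamma I C d M \<beta> \<alpha> (comp I C n \<alpha> x))"

definition Psi :: "(nat \<Rightarrow> 'c set) \<Rightarrow> ('c \<Rightarrow> 'v::real_vector set) \<Rightarrow> ('v \<Rightarrow> 'v) \<Rightarrow> ('c \<times> 'c) set \<Rightarrow> nat \<Rightarrow> 'v \<Rightarrow> 'v" where
  "Psi I C d M n x = (\<Sum>\<alpha>\<in>I n. \<Sum>\<beta>\<in>I n \<inter> unmatched M. Gamma I C d M \<beta> \<alpha> (comp I C n \<alpha> x))"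

definition adj :: "'v::real_inner set \<Rightarrow> ('v \<Rightarrow> 'w::real_inner) \<Rightarrow> 'w \<Rightarrow> 'v" where
  "adj A f y = (THE z. z \<in> A \<and> (\<forall>a\<in>A. inner (f a) y = inner a z))"

definition oproj :: "'v::real_inner set \<Rightarrow> 'v \<Rightarrow> 'v" where
  "oproj W x = (THE p. p \<in> W \<and> (\<forall>w\<in>W. inner (x - p) w = 0))"

definition nfree :: "(nat \<Rightarrow> 'c set) \<Rightarrow> ('c \<times> 'c) set \<Rightarrow> nat \<Rightarrow> bool" where
  "nfree I M n \<longleftrightarrow> (\<forall>(\<alpha>, \<beta>)\<in>M. \<not> (\<exists>m. n = Suc m \<and> \<alpha> \<in> I n \<and> \<beta> \<in> I m))"

end

theory Submission
  imports Defs
begin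
definition lin_on :: "'a::real_vector set \<Rightarrow> ('a \<Rightarrow> 'b::real_vector) \<Rightarrow> bool" where
  "lin_on A f \<longleftrightarrow> (\<forall>x\<in>A. \<forall>y\<in>A. f (x + y) = f x + f y) \<and> (\<forall>c. \<forall>x\<in>A. f (c *\<^sub>R x) = c *\<^sub>R f x)"

lemma lin_onD: "lin_on A f \<Longrightarrow> x \<in> A \<Longrightarrow> y \<in> A \<Longrightarrow> f (x + y) = f x + f y"
  "lin_on A f \<Longrightarrow> x \<in> A \<Longrightarrow> f (c *\<^sub>R x) = c *\<^sub>R f x"
  by (auto simp: lin_on_def)

lemma lin_on_0: "lin_on A f \<Longrightarrow> 0 \<in> A \<Longrightarrow> f 0 = 0"
  using lin_onD(2)[of A f 0 0] by simp

lemma lin_on_neg: "lin_on A f \<Longrightarrow> x \<in> A \<Longrightarrow> f (- x) = - f x"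
  using lin_onD(2)[of A f x "-1"] by simp

lemma lin_on_diff: "lin_on A f \<Longrightarrow> subspace A \<Longrightarrow> x \<in> A \<Longrightarrow> y \<in> A \<Longrightarrow> f (x - y) = f x - f y"
  using lin_onD(1)[of A f x "-y"] lin_on_neg[of A f y] subspace_neg[of A y]
  by simp

lemma lin_on_sum:
  assumes "lin_on A f" "subspace A" "\<And>i. i \<in> S \<Longrightarrow> g i \<in> A"
  shows "f (sum g S) = (\<Sum>i\<in>S. f (g i))"
proof (cases "finite S")
  case True
  then show ?thesis using assms(3)
  proof (induction S rule: finite_induct)
    case empty then show ?case using lin_on_0[OF assms(1)] assms(2) subspace_0 by auto
  next
    case (insert a S)
    have "sum g S \<in> A" using insert.prems by (intro subspace_sum[OF assms(2)]) auto
    then show ?case using insert lin_onD(1)[OF assms(1), of "g a" "sum g S"] by simp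
  qed
next
  case False then show ?thesis using lin_on_0[OF assms(1)] assms(2) subspace_0 by auto
qed

lemma lin_on_subset: "lin_on A f \<Longrightarrow> B \<subseteq> A \<Longrightarrow> lin_on B f"
  unfolding lin_on_def by blast

lemma orth_basis:
  fixes B :: "'a::real_inner set"
  assumes "finite B"
  obtains Ob where "finite Ob" "pairwise orthogonal Ob" "0 \<notin> Ob" "span Ob = span B"
proof -
  obtain Ob where Ob: "finite Ob" "span Ob = span B" "pairwise orthogonal Ob"
    using basis_orthogonal[OF assms] by blast
  have "span (Ob - {0}) = span Ob" by simp
  moreover have "pairwise orthogonal (Ob - {0})" using Ob(3) by (auto simp: pairwise_def)
  ultimately show ?thesis using that[of "Ob - {0}"] Ob by auto
qed

lemma orth_proj:
  fixes Ob :: "'a::real_inner set"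
  assumes "finite Ob" "pairwise orthogonal Ob" "0 \<notin> Ob" "w \<in> span Ob"
  shows "inner (x - (\<Sum>e\<in>Ob. (inner x e / inner e e) *\<^sub>R e)) w = 0"
proof -
  have "orthogonal (x - (\<Sum>e\<in>Ob. (inner x e / inner e e) *\<^sub>R e)) e'" if "e' \<in> Ob" for e'
  proof -
    have "inner (\<Sum>e\<in>Ob. (inner x e / inner e e) *\<^sub>R e) e' = (\<Sum>e\<in>Ob. (inner x e / inner e e) * inner e e')"
      by (simp add: inner_sum_left)
    also have "\<dots> = (\<Sum>e\<in>Ob. if e = e' then inner x e' else 0)"
    proof (rule sum.cong[OF refl])
      fix e assume "e \<in> Ob"
      show "inner x e / inner e e * inner e e' = (if e = e' then inner x e' else 0)"
      proof (cases "e = e'")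
        case True then show ?thesis using assms(3) \<open>e' \<in> Ob\<close> by auto
      next
        case False then show ?thesis using assms(2) \<open>e \<in> Ob\<close> \<open>e' \<in> Ob\<close>
          by (auto simp: pairwise_def orthogonal_def)
      qed
    qed
    also have "\<dots> = inner x e'" using assms(1) that by simp
    finally show ?thesis by (simp add: orthogonal_def inner_diff_left)
  qed
  then have "orthogonal (x - (\<Sum>e\<in>Ob. (inner x e / inner e e) *\<^sub>R e)) w"
    using orthogonal_to_span[OF assms(4)] by blast
  then show ?thesis by (simp add: orthogonal_def)
qed

lemma proj_exists:
  fixes B :: "'a::real_inner set"
  assumes "finite B"
  shows "\<exists>p\<in>span B. \<forall>w\<in>span B. inner (x - p) w = 0"
proof -
  obtain Ob where Ob: "finite Ob" "pairwise orthogonal Ob" "0 \<notin> Ob" "span Ob = span B"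
    using orth_basis[OF assms] by blast
  let ?p = "\<Sum>e\<in>Ob. (inner x e / inner e e) *\<^sub>R e"
  have "?p \<in> span Ob" by (intro span_sum span_mul span_base)
  moreover have "\<forall>w\<in>span Ob. inner (x - ?p) w = 0" using orth_proj[OF Ob(1-3)] by blast
  ultimately show ?thesis using Ob(4) by auto
qed

lemma orth_expand:
  fixes Ob :: "'a::real_inner set"
  assumes "finite Ob" "pairwise orthogonal Ob" "0 \<notin> Ob" "a \<in> span Ob"
  shows "a = (\<Sum>e\<in>Ob. (inner a e / inner e e) *\<^sub>R e)"
proof -
  let ?p = "\<Sum>e\<in>Ob. (inner a e / inner e e) *\<^sub>R e"
  have "?p \<in> span Ob" by (intro span_sum span_mul, rule span_base)
  then have "a - ?p \<in> span Ob" using assms(4) span_diff by blast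
  then have "inner (a - ?p) (a - ?p) = 0" using orth_proj[OF assms(1-3)] by blast
  then show ?thesis by simp
qed

lemma adj_exists:
  fixes B :: "'a::real_inner set" and f :: "'a \<Rightarrow> 'b::real_inner"
  assumes "finite B" "lin_on (span B) f"
  shows "\<exists>z\<in>span B. \<forall>a\<in>span B. inner (f a) y = inner a z"
proof -
  obtain Ob where Ob: "finite Ob" "pairwise orthogonal Ob" "0 \<notin> Ob" "span Ob = span B"
    using orth_basis[OF assms(1)] by blast
  let ?z = "\<Sum>e\<in>Ob. (inner (f e) y / inner e e) *\<^sub>R e"
  have "?z \<in> span B" unfolding Ob(4)[symmetric] by (intro span_sum span_mul, rule span_base)
  moreover have "inner (f a) y = inner a ?z" if "a \<in> span B" for a
  proof -
    have a: "a = (\<Sum>e\<in>Ob. (inner a e / inner e e) *\<^sub>R e)"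
      using orth_expand[OF Ob(1-3)] that Ob(4) by auto
    have "f a = (\<Sum>e\<in>Ob. f ((inner a e / inner e e) *\<^sub>R e))"
      by (subst a, rule lin_on_sum[OF assms(2)]) (simp, metis Ob(4) span_base span_mul)
    also have "\<dots> = (\<Sum>e\<in>Ob. (inner a e / inner e e) *\<^sub>R f e)"
      by (rule sum.cong[OF refl], rule lin_onD(2)[OF assms(2)]) (metis Ob(4) span_base)
    finally have "inner (f a) y = (\<Sum>e\<in>Ob. (inner a e / inner e e) * inner (f e) y)"
      by (simp add: inner_sum_left)
    also have "\<dots> = inner a ?z"
      by (simp add: inner_sum_right mult.commute)
    finally show ?thesis .
  qed
  ultimately show ?thesis by blast
qed

lemma adj_prop:
  fixes B :: "'a::real_inner set" and f :: "'a \<Rightarrow> 'b::real_inner"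
  assumes "finite B" "lin_on (span B) f"
  shows "adj (span B) f y \<in> span B \<and> (\<forall>a\<in>span B. inner (f a) y = inner a (adj (span B) f y))"
proof -
  obtain z where z: "z \<in> span B" "\<forall>a\<in>span B. inner (f a) y = inner a z"
    using adj_exists[OF assms] by blast
  have "adj (span B) f y = z"
    unfolding adj_def
  proof (rule the_equality)
    fix z' assume z': "z' \<in> span B \<and> (\<forall>a\<in>span B. inner (f a) y = inner a z')"
    have "z' - z \<in> span B" using z z' span_diff by blast
    then have "inner (z' - z) z' = inner (z' - z) z" using z z' by metis
    then have "inner (z' - z) (z' - z) = 0" by (simp add: inner_diff_right)
    then show "z' = z" by simp
  qed (use z in auto)
  then show ?thesis using z by simp
qed

lemma lin_on_image_span:
  assumes "lin_on (span G) f"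
  shows "f ` span G = span (f ` G)"
proof
  have "subspace (f ` span G)"
    unfolding subspace_def
  proof (intro conjI ballI allI)
    show "0 \<in> f ` span G" using lin_on_0[OF assms] span_zero by (metis image_eqI)
  next
    fix x y assume "x \<in> f ` span G" "y \<in> f ` span G"
    then obtain a b where "a \<in> span G" "b \<in> span G" "x = f a" "y = f b" by blast
    then show "x + y \<in> f ` span G" using lin_onD(1)[OF assms] span_add by (metis image_eqI)
  next
    fix c x assume "x \<in> f ` span G"
    then obtain a where "a \<in> span G" "x = f a" by blast
    then show "c *\<^sub>R x \<in> f ` span G" using lin_onD(2)[OF assms] span_mul by (metis image_eqI)
  qed
  then show "span (f ` G) \<subseteq> f ` span G"
    by (intro span_minimal) (auto intro: span_base)
next
  have sub: "subspace {x. x \<in> span G \<and> f x \<in> span (f ` G)}"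
    unfolding subspace_def
  proof (intro conjI ballI allI)
    show "0 \<in> {x. x \<in> span G \<and> f x \<in> span (f ` G)}"
      using lin_on_0[OF assms] by (simp add: span_zero)
  next
    fix x y assume "x \<in> {x. x \<in> span G \<and> f x \<in> span (f ` G)}" "y \<in> {x. x \<in> span G \<and> f x \<in> span (f ` G)}"
    then show "x + y \<in> {x. x \<in> span G \<and> f x \<in> span (f ` G)}"
      using lin_onD(1)[OF assms, of x y] span_add[of "f x" "f ` G" "f y"] span_add[of x G y] by auto
  next
    fix c x assume "x \<in> {x. x \<in> span G \<and> f x \<in> span (f ` G)}"
    then show "c *\<^sub>R x \<in> {x. x \<in> span G \<and> f x \<in> span (f ` G)}"
      using lin_onD(2)[OF assms, of x c] span_mul[of "f x" "f ` G" c] span_mul[of x G c] by auto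
  qed
  have "f x \<in> span (f ` G)" if "x \<in> span G" for x
    using span_induct[OF that sub] by (auto intro: span_base)
  then show "f ` span G \<subseteq> span (f ` G)" by blast
qed

lemma chains_subspace:
  assumes "\<And>\<alpha>. subspace (C \<alpha>)"
  shows "subspace (chains J C n)"
  unfolding subspace_def
proof (intro conjI ballI allI)
  show "0 \<in> chains J C n" unfolding chains_def
    by (rule CollectI, rule exI[of _ "\<lambda>_. 0"]) (simp add: subspace_0[OF assms])
next
  fix x y assume "x \<in> chains J C n" "y \<in> chains J C n"
  then obtain f g where "x = sum f (J n)" "\<forall>\<alpha>\<in>J n. f \<alpha> \<in> C \<alpha>" "y = sum g (J n)" "\<forall>\<alpha>\<in>J n. g \<alpha> \<in> C \<alpha>"
    unfolding chains_def by blast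
  then show "x + y \<in> chains J C n" unfolding chains_def
    by (intro CollectI exI[of _ "\<lambda>\<alpha>. f \<alpha> + g \<alpha>"]) (simp add: sum.distrib subspace_add[OF assms])
next
  fix c x assume "x \<in> chains J C n"
  then obtain f where "x = sum f (J n)" "\<forall>\<alpha>\<in>J n. f \<alpha> \<in> C \<alpha>"
    unfolding chains_def by blast
  then show "c *\<^sub>R x \<in> chains J C n" unfolding chains_def
    by (intro CollectI exI[of _ "\<lambda>\<alpha>. c *\<^sub>R f \<alpha>"]) (simp add: scaleR_sum_right subspace_scale[OF assms])
qed

lemma C_sub_chains_gen:
  assumes "\<And>\<alpha>. subspace (C \<alpha>)" "finite (J n)" "\<alpha> \<in> J n" "x \<in> C \<alpha>"
  shows "x \<in> chains J C n"
  unfolding chains_def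
proof (intro CollectI exI[of _ "\<lambda>\<beta>. if \<beta> = \<alpha> then x else 0"] conjI)
  show "x = (\<Sum>\<beta>\<in>J n. if \<beta> = \<alpha> then x else 0)" using assms(2,3) by simp
  show "\<forall>\<beta>\<in>J n. (if \<beta> = \<alpha> then x else 0) \<in> C \<beta>" using assms(1,4) subspace_0 by auto
qed

lemma chains_span_gen:
  assumes "\<And>\<alpha>. subspace (C \<alpha>)" "finite (J n)" "\<And>\<alpha>. \<exists>B. finite B \<and> C \<alpha> = span B"
  shows "\<exists>G. finite G \<and> chains J C n = span G"
proof -
  define B where "B \<alpha> = (SOME B. finite B \<and> C \<alpha> = span B)" for \<alpha>
  have B: "finite (B \<alpha>) \<and> C \<alpha> = span (B \<alpha>)" for \<alpha>
    unfolding B_def using someI_ex[OF assms(3)] by blast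
  let ?G = "\<Union>\<alpha>\<in>J n. B \<alpha>"
  have "finite ?G" using B assms(2) by auto
  moreover have "chains J C n \<subseteq> span ?G"
  proof
    fix x assume "x \<in> chains J C n"
    then obtain f where f: "x = sum f (J n)" "\<forall>\<alpha>\<in>J n. f \<alpha> \<in> C \<alpha>"
      unfolding chains_def by blast
    have "f \<alpha> \<in> span ?G" if "\<alpha> \<in> J n" for \<alpha>
    proof -
      have "f \<alpha> \<in> span (B \<alpha>)" using f(2) that B by auto
      moreover have "span (B \<alpha>) \<subseteq> span ?G" using that by (intro span_mono) auto
      ultimately show ?thesis by blast
    qed
    then show "x \<in> span ?G" unfolding f(1) by (intro span_sum)
  qed
  moreover have "span ?G \<subseteq> chains J C n"
  proof (rule span_minimal[OF _ chains_subspace[OF assms(1)]])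
    show "?G \<subseteq> chains J C n"
    proof
      fix b assume "b \<in> ?G"
      then obtain \<alpha> where "\<alpha> \<in> J n" "b \<in> B \<alpha>" by blast
      then have "b \<in> C \<alpha>" using B span_base by blast
      then show "b \<in> chains J C n" using C_sub_chains_gen[where C=C and J=J and n=n, OF assms(1) assms(2) \<open>\<alpha> \<in> J n\<close>] by blast
    qed
  qed
  ultimately show ?thesis by blast
qed

locale MC =
  fixes I :: "nat \<Rightarrow> 'c set" and C :: "'c \<Rightarrow> 'v::real_inner set" and d :: "'v \<Rightarrow> 'v"
    and M :: "('c \<times> 'c) set"
  assumes fbc: "fin_based_complex I C d" and mm: "morse_matching I C d M"
begin

lemmas fbc_c = fbc[unfolded fin_based_complex_def]
lemmas mm_c = mm[unfolded morse_matching_def]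

lemma finI: "finite (I n)" using fbc_c[THEN conjunct1] by blast
lemma disjI: "n \<noteq> m \<Longrightarrow> I n \<inter> I m = {}" using fbc_c[THEN conjunct2, THEN conjunct1] by blast
lemma inI_unique: "a \<in> I n \<Longrightarrow> a \<in> I m \<Longrightarrow> n = m" using disjI by blast
lemma C_span: "\<exists>B. finite B \<and> C \<alpha> = span B" using fbc_c[THEN conjunct2, THEN conjunct2, THEN conjunct1] by blast
lemma subC: "subspace (C \<alpha>)" using C_span[of \<alpha>] subspace_span by metis
lemma C0: "0 \<in> C \<alpha>" using subC subspace_0 by blast
lemma C_add: "x \<in> C \<alpha> \<Longrightarrow> y \<in> C \<alpha> \<Longrightarrow> x + y \<in> C \<alpha>" using subC subspace_add by blast
lemma C_scale: "x \<in> C \<alpha> \<Longrightarrow> c *\<^sub>R x \<in> C \<alpha>" using subC subspace_scale by blast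
lemma C_neg: "x \<in> C \<alpha> \<Longrightarrow> - x \<in> C \<alpha>" using subC subspace_neg by blast
lemma C_diff: "x \<in> C \<alpha> \<Longrightarrow> y \<in> C \<alpha> \<Longrightarrow> x - y \<in> C \<alpha>" using subC subspace_diff by blast
lemma C_sum: "(\<And>i. i \<in> S \<Longrightarrow> g i \<in> C \<alpha>) \<Longrightarrow> sum g S \<in> C \<alpha>" using subC subspace_sum by blast

lemma dsum: "(\<forall>\<alpha>\<in>I n. f \<alpha> \<in> C \<alpha>) \<Longrightarrow> sum f (I n) = 0 \<Longrightarrow> \<alpha> \<in> I n \<Longrightarrow> f \<alpha> = 0"
  using fbc_c[THEN conjunct2, THEN conjunct2, THEN conjunct2, THEN conjunct1] by blast

lemma lin_d: "lin_on (chains I C n) d"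
  using fbc_c[THEN conjunct2, THEN conjunct2, THEN conjunct2, THEN conjunct2, THEN conjunct1]
    fbc_c[THEN conjunct2, THEN conjunct2, THEN conjunct2, THEN conjunct2, THEN conjunct2, THEN conjunct1]
  unfolding lin_on_def by blast
lemma d_chains: "x \<in> chains I C (Suc n) \<Longrightarrow> d x \<in> chains I C n"
  using fbc_c[THEN conjunct2, THEN conjunct2, THEN conjunct2, THEN conjunct2, THEN conjunct2, THEN conjunct2, THEN conjunct1] by blast
lemma d_0chains: "x \<in> chains I C 0 \<Longrightarrow> d x = 0"
  using fbc_c[THEN conjunct2, THEN conjunct2, THEN conjunct2, THEN conjunct2, THEN conjunct2, THEN conjunct2, THEN conjunct2, THEN conjunct1] by blast
lemma dd: "x \<in> chains I C n \<Longrightarrow> d (d x) = 0"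
  using fbc_c[THEN conjunct2, THEN conjunct2, THEN conjunct2, THEN conjunct2, THEN conjunct2, THEN conjunct2, THEN conjunct2, THEN conjunct2] by blast

lemma sub_chains: "subspace (chains I C n)" by (rule chains_subspace[OF subC])
lemma chains_0: "0 \<in> chains I C n" by (rule subspace_0[OF sub_chains])
lemma chains_sum: "(\<And>i. i \<in> S \<Longrightarrow> g i \<in> chains I C n) \<Longrightarrow> sum g S \<in> chains I C n"
  by (rule subspace_sum[OF sub_chains])
lemma chains_diff: "x \<in> chains I C n \<Longrightarrow> y \<in> chains I C n \<Longrightarrow> x - y \<in> chains I C n"
  by (rule subspace_diff[OF sub_chains])
lemma d0: "d 0 = 0" using lin_on_0[OF lin_d chains_0] .
lemma C_sub_chains: "\<alpha> \<in> I n \<Longrightarrow> x \<in> C \<alpha> \<Longrightarrow> x \<in> chains I C n"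
  by (rule C_sub_chains_gen[OF subC finI])
lemma chains_span: "\<exists>G. finite G \<and> chains I C n = span G"
  by (rule chains_span_gen[OF subC finI C_span])

lemma mchains_span: "\<exists>G. finite G \<and> mchains I C M n = span G"
  unfolding mchains_def by (rule chains_span_gen[OF subC _ C_span]) (simp add: finI)

lemma mchains_sub: "mchains I C M n \<subseteq> chains I C n"
proof
  fix x assume "x \<in> mchains I C M n"
  then obtain f where f: "x = sum f (I n \<inter> unmatched M)" "\<forall>\<alpha>\<in>I n \<inter> unmatched M. f \<alpha> \<in> C \<alpha>"
    unfolding mchains_def chains_def by blast
  have "x = (\<Sum>\<alpha>\<in>I n. if \<alpha> \<in> unmatched M then f \<alpha> else 0)"
    unfolding f(1) using finI by (simp add: sum.If_cases Int_commute)
  then show "x \<in> chains I C n" unfolding chains_def using f(2) C0 by auto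
qed

lemma comp_sum:
  assumes "\<forall>\<gamma>\<in>I n. f \<gamma> \<in> C \<gamma>"
  shows "comp I C n \<beta> (sum f (I n)) = (if \<beta> \<in> I n then f \<beta> else 0)"
proof -
  let ?g = "\<lambda>\<gamma>. if \<gamma> \<in> I n then f \<gamma> else 0"
  have "(THE g. (\<forall>\<gamma>\<in>I n. g \<gamma> \<in> C \<gamma>) \<and> (\<forall>\<gamma>. \<gamma> \<notin> I n \<longrightarrow> g \<gamma> = 0) \<and> sum g (I n) = sum f (I n)) = ?g"
  proof (rule the_equality)
    show "(\<forall>\<gamma>\<in>I n. ?g \<gamma> \<in> C \<gamma>) \<and> (\<forall>\<gamma>. \<gamma> \<notin> I n \<longrightarrow> ?g \<gamma> = 0) \<and> sum ?g (I n) = sum f (I n)"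
      using assms by simp
  next
    fix g assume g: "(\<forall>\<gamma>\<in>I n. g \<gamma> \<in> C \<gamma>) \<and> (\<forall>\<gamma>. \<gamma> \<notin> I n \<longrightarrow> g \<gamma> = 0) \<and> sum g (I n) = sum f (I n)"
    have "g \<gamma> - f \<gamma> = 0" if "\<gamma> \<in> I n" for \<gamma>
    proof (rule dsum[of n "\<lambda>\<gamma>. g \<gamma> - f \<gamma>"])
      show "\<forall>\<alpha>\<in>I n. g \<alpha> - f \<alpha> \<in> C \<alpha>" using g assms C_diff by blast
      show "(\<Sum>\<alpha>\<in>I n. g \<alpha> - f \<alpha>) = 0" using g by (simp add: sum_subtractf)
    qed fact
    then show "g = ?g" using g by (auto simp: fun_eq_iff)
  qed
  then show ?thesis unfolding comp_def by simp
qed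

lemma chainsE:
  assumes "x \<in> chains I C n"
  obtains f where "\<forall>\<gamma>\<in>I n. f \<gamma> \<in> C \<gamma>" "x = sum f (I n)"
  using assms unfolding chains_def by blast

lemma comp_in: "x \<in> chains I C n \<Longrightarrow> comp I C n \<beta> x \<in> C \<beta>"
  by (erule chainsE) (simp add: comp_sum C0)

lemma comp_recon: "x \<in> chains I C n \<Longrightarrow> x = (\<Sum>\<beta>\<in>I n. comp I C n \<beta> x)"
  by (erule chainsE) (simp add: comp_sum)

lemma comp_out: "\<beta> \<notin> I n \<Longrightarrow> x \<in> chains I C n \<Longrightarrow> comp I C n \<beta> x = 0"
  by (erule chainsE) (simp add: comp_sum)

lemma comp_lin: "lin_on (chains I C n) (comp I C n \<beta>)"
  unfolding lin_on_def
proof (intro conjI ballI allI)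
  fix x y assume "x \<in> chains I C n" "y \<in> chains I C n"
  then obtain f g where f: "\<forall>\<gamma>\<in>I n. f \<gamma> \<in> C \<gamma>" "x = sum f (I n)" and g: "\<forall>\<gamma>\<in>I n. g \<gamma> \<in> C \<gamma>" "y = sum g (I n)"
    by (metis chainsE)
  have "x + y = (\<Sum>\<gamma>\<in>I n. f \<gamma> + g \<gamma>)" using f g by (simp add: sum.distrib)
  moreover have "\<forall>\<gamma>\<in>I n. f \<gamma> + g \<gamma> \<in> C \<gamma>" using f g C_add by blast
  ultimately show "comp I C n \<beta> (x + y) = comp I C n \<beta> x + comp I C n \<beta> y"
    using f g by (simp add: comp_sum)
next
  fix c x assume "x \<in> chains I C n"
  then obtain f where f: "\<forall>\<gamma>\<in>I n. f \<gamma> \<in> C \<gamma>" "x = sum f (I n)"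
    by (metis chainsE)
  have "c *\<^sub>R x = (\<Sum>\<gamma>\<in>I n. c *\<^sub>R f \<gamma>)" using f by (simp add: scaleR_sum_right)
  moreover have "\<forall>\<gamma>\<in>I n. c *\<^sub>R f \<gamma> \<in> C \<gamma>" using f C_scale by blast
  ultimately show "comp I C n \<beta> (c *\<^sub>R x) = c *\<^sub>R comp I C n \<beta> x"
    using f by (simp add: comp_sum)
qed

lemma comp_single:
  assumes "\<alpha> \<in> I n" "x \<in> C \<alpha>"
  shows "comp I C n \<beta> x = (if \<beta> = \<alpha> then x else 0)"
proof -
  let ?f = "\<lambda>\<gamma>. if \<gamma> = \<alpha> then x else 0"
  have e: "sum ?f (I n) = x" using assms(1) finI by simp
  have "\<forall>\<gamma>\<in>I n. ?f \<gamma> \<in> C \<gamma>" using assms C0 by auto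
  then have "comp I C n \<beta> (sum ?f (I n)) = (if \<beta> \<in> I n then ?f \<beta> else 0)" by (rule comp_sum)
  then show ?thesis using e assms(1) by auto
qed

lemma deg_eq: "\<alpha> \<in> I n \<Longrightarrow> deg I \<alpha> = n"
  unfolding deg_def using inI_unique by blast

lemma blk_eq: "\<beta> \<in> I k \<Longrightarrow> blk I C d \<beta> \<alpha> x = comp I C k \<beta> (d x)"
  unfolding blk_def by (simp add: deg_eq)

lemma blk_in: "\<alpha> \<in> I (Suc k) \<Longrightarrow> \<beta> \<in> I k \<Longrightarrow> x \<in> C \<alpha> \<Longrightarrow> blk I C d \<beta> \<alpha> x \<in> C \<beta>"
  by (simp add: blk_eq comp_in d_chains C_sub_chains)

lemma blk_lin: "\<alpha> \<in> I (Suc k) \<Longrightarrow> \<beta> \<in> I k \<Longrightarrow> lin_on (C \<alpha>) (blk I C d \<beta> \<alpha>)"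
  unfolding lin_on_def
proof (intro conjI ballI allI)
  fix x y assume a: "\<alpha> \<in> I (Suc k)" "\<beta> \<in> I k" "x \<in> C \<alpha>" "y \<in> C \<alpha>"
  then have c: "x \<in> chains I C (Suc k)" "y \<in> chains I C (Suc k)" by (auto intro: C_sub_chains)
  show "blk I C d \<beta> \<alpha> (x + y) = blk I C d \<beta> \<alpha> x + blk I C d \<beta> \<alpha> y"
    using a c lin_onD(1)[OF lin_d c] lin_onD(1)[OF comp_lin d_chains d_chains] by (simp add: blk_eq)
next
  fix c x assume a: "\<alpha> \<in> I (Suc k)" "\<beta> \<in> I k" "x \<in> C \<alpha>"
  then have cx: "x \<in> chains I C (Suc k)" by (auto intro: C_sub_chains)
  show "blk I C d \<beta> \<alpha> (c *\<^sub>R x) = c *\<^sub>R blk I C d \<beta> \<alpha> x"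
    using a cx lin_onD(2)[OF lin_d cx] lin_onD(2)[OF comp_lin d_chains[OF cx]] by (simp add: blk_eq)
qed

lemma d_decomp: "y \<in> chains I C (Suc k) \<Longrightarrow> d y = (\<Sum>\<beta>\<in>I k. blk I C d \<beta> \<alpha> y)"
  using comp_recon[OF d_chains] by (simp add: blk_eq)

lemma blk_zero_nonedge:
  assumes "(\<alpha>, \<beta>) \<notin> edges I C d" "\<alpha> \<in> I (Suc k)" "\<beta> \<in> I k" "x \<in> C \<alpha>"
  shows "blk I C d \<beta> \<alpha> x = 0"
  using assms unfolding edges_def by blast

lemma edgesD: "(a, b) \<in> edges I C d \<Longrightarrow> \<exists>k. a \<in> I (Suc k) \<and> b \<in> I k"
  unfolding edges_def by blast

lemma M_edges: "M \<subseteq> edges I C d" using mm_c[THEN conjunct1] by blast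
lemma M_lev: "(a, b) \<in> M \<Longrightarrow> \<exists>k. a \<in> I (Suc k) \<and> b \<in> I k" using M_edges edgesD by blast
lemma M_bij: "(a, b) \<in> M \<Longrightarrow> bij_betw (blk I C d b a) (C a) (C b)"
  using mm_c[THEN conjunct2, THEN conjunct2, THEN conjunct1] by blast
lemma M_disj: "e \<in> M \<Longrightarrow> e' \<in> M \<Longrightarrow> e \<noteq> e' \<Longrightarrow> {fst e, snd e} \<inter> {fst e', snd e'} = {}"
  using mm_c[THEN conjunct2, THEN conjunct1] by blast

lemma M_uniq1: "(a, b) \<in> M \<Longrightarrow> (a, b') \<in> M \<Longrightarrow> b = b'"
  using M_disj[of "(a,b)" "(a,b')"] by auto
lemma M_uniq2: "(a, b) \<in> M \<Longrightarrow> (a', b) \<in> M \<Longrightarrow> a = a'"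
  using M_disj[of "(a,b)" "(a',b)"] by auto
lemma M_irrefl: "(a, b) \<in> M \<Longrightarrow> a \<noteq> b"
  using M_lev inI_unique by fastforce
lemma M_chain: "(a, b) \<in> M \<Longrightarrow> (b, c) \<in> M \<Longrightarrow> False"
  using M_disj[of "(a,b)" "(b,c)"] M_irrefl by auto
lemma DR_disj: "x \<in> Domain M \<Longrightarrow> x \<in> Range M \<Longrightarrow> False"
  using M_chain by blast

lemma porder: "partial_order_on (I n) {(\<alpha>, \<beta>). \<alpha> \<in> I n \<and> \<beta> \<in> I n \<and> mpaths I C d M \<alpha> \<beta> \<noteq> {}}"
  using mm_c[THEN conjunct2, THEN conjunct2, THEN conjunct2] by (rule spec)

lemma antisym_mp: "a \<in> I n \<Longrightarrow> b \<in> I n \<Longrightarrow> mpaths I C d M a b \<noteq> {} \<Longrightarrow> mpaths I C d M b a \<noteq> {} \<Longrightarrow> a = b"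
proof -
  assume a: "a \<in> I n" "b \<in> I n" "mpaths I C d M a b \<noteq> {}" "mpaths I C d M b a \<noteq> {}"
  have "antisym {(\<alpha>, \<beta>). \<alpha> \<in> I n \<and> \<beta> \<in> I n \<and> mpaths I C d M \<alpha> \<beta> \<noteq> {}}"
    using porder[of n] unfolding partial_order_on_def by (rule conjunct2)
  then show "a = b" by (rule antisymD) (use a in auto)
qed

lemma blk_inv_prop:
  assumes "(a, b) \<in> M" "y \<in> C b"
  shows "blk_inv I C d b a y \<in> C a \<and> blk I C d b a (blk_inv I C d b a y) = y"
proof -
  have bij: "bij_betw (blk I C d b a) (C a) (C b)" using M_bij[OF assms(1)] .
  have inj: "inj_on (blk I C d b a) (C a)" and im: "blk I C d b a ` C a = C b"
    using bij unfolding bij_betw_def by auto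
  have "y \<in> blk I C d b a ` C a" using im assms(2) by simp
  then obtain x where x: "x \<in> C a" "blk I C d b a x = y" by (auto elim!: imageE)
  have "blk_inv I C d b a y = x"
    unfolding blk_inv_def
  proof (rule the_equality)
    fix x' assume x': "x' \<in> C a \<and> blk I C d b a x' = y"
    show "x' = x" by (rule inj_onD[OF inj]) (use x x' in auto)
  qed (use x in blast)
  then show ?thesis using x by simp
qed

lemma blk_inv_blk:
  assumes "(a, b) \<in> M" "x \<in> C a"
  shows "blk_inv I C d b a (blk I C d b a x) = x"
proof -
  have bij: "bij_betw (blk I C d b a) (C a) (C b)" using M_bij[OF assms(1)] .
  have "blk I C d b a x \<in> C b" using bij assms(2) unfolding bij_betw_def by blast
  then have "blk_inv I C d b a (blk I C d b a x) \<in> C a \<and> blk I C d b a (blk_inv I C d b a (blk I C d b a x)) = blk I C d b a x"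
    using blk_inv_prop[OF assms(1)] by blast
  then show ?thesis using bij assms(2) unfolding bij_betw_def inj_on_def by blast
qed

lemma blk_inv_lin:
  assumes "(a, b) \<in> M"
  shows "lin_on (C b) (blk_inv I C d b a)"
proof -
  obtain k where k: "a \<in> I (Suc k)" "b \<in> I k" using M_lev[OF assms] by blast
  have bij: "bij_betw (blk I C d b a) (C a) (C b)" using M_bij[OF assms(1)] .
  note L = blk_lin[OF k]
  note P = blk_inv_prop[OF assms]
  show ?thesis unfolding lin_on_def
  proof (intro conjI ballI allI)
    fix x y assume xy: "x \<in> C b" "y \<in> C b"
    have "blk I C d b a (blk_inv I C d b a x + blk_inv I C d b a y) = x + y"
      using lin_onD(1)[OF L] P xy by simp
    moreover have "blk I C d b a (blk_inv I C d b a (x + y)) = x + y" using P xy C_add by blast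
    moreover have "blk_inv I C d b a x + blk_inv I C d b a y \<in> C a" using P xy C_add by blast
    moreover have "blk_inv I C d b a (x + y) \<in> C a" using P xy C_add by blast
    ultimately show "blk_inv I C d b a (x + y) = blk_inv I C d b a x + blk_inv I C d b a y"
      using bij unfolding bij_betw_def inj_on_def by metis
  next
    fix c x assume x: "x \<in> C b"
    have "blk I C d b a (c *\<^sub>R blk_inv I C d b a x) = c *\<^sub>R x"
      using lin_onD(2)[OF L] P x by simp
    moreover have "blk I C d b a (blk_inv I C d b a (c *\<^sub>R x)) = c *\<^sub>R x" using P x C_scale by blast
    moreover have "c *\<^sub>R blk_inv I C d b a x \<in> C a" using P x C_scale by blast
    moreover have "blk_inv I C d b a (c *\<^sub>R x) \<in> C a" using P x C_scale by blast
    ultimately show "blk_inv I C d b a (c *\<^sub>R x) = c *\<^sub>R blk_inv I C d b a x"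
      using bij unfolding bij_betw_def inj_on_def by metis
  qed
qed

end

definition ppath :: "('c \<times> 'c) set \<Rightarrow> 'c list \<Rightarrow> bool" where
  "ppath E p \<longleftrightarrow> (\<forall>i. Suc i < length p \<longrightarrow> (p ! i, p ! Suc i) \<in> E)"

lemma ppath_Nil[simp]: "ppath E []" and ppath_single[simp]: "ppath E [a]"
  by (auto simp: ppath_def)

lemma ppath_Cons: "ppath E (a # q) \<longleftrightarrow> (q = [] \<or> ((a, hd q) \<in> E \<and> ppath E q))"
proof (cases q)
  case Nil then show ?thesis by simp
next
  case (Cons b r)
  have "ppath E (a # b # r) \<longleftrightarrow> (a, b) \<in> E \<and> ppath E (b # r)"
    unfolding ppath_def
    by (auto simp: nth_Cons split: nat.splits)
  then show ?thesis using Cons by simp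
qed

lemma ppath_snoc: "ppath E (q @ [b]) \<longleftrightarrow> (q = [] \<or> (ppath E q \<and> (last q, b) \<in> E))"
proof (cases "q = []")
  case True then show ?thesis by simp
next
  case False
  show ?thesis
  proof
    assume a: "ppath E (q @ [b])"
    have "ppath E q" unfolding ppath_def
    proof (intro allI impI)
      fix i assume "Suc i < length q"
      then show "(q ! i, q ! Suc i) \<in> E" using a[unfolded ppath_def, rule_format, of i]
        by (simp add: nth_append)
    qed
    moreover have "(last q, b) \<in> E" using a[unfolded ppath_def, rule_format, of "length q - 1"] False
      by (simp add: nth_append last_conv_nth)
    ultimately show "q = [] \<or> (ppath E q \<and> (last q, b) \<in> E)" by blast
  next
    assume "q = [] \<or> (ppath E q \<and> (last q, b) \<in> E)"
    then have a: "ppath E q" "(last q, b) \<in> E" using False by auto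
    show "ppath E (q @ [b])" unfolding ppath_def
    proof (intro allI impI)
      fix i assume i: "Suc i < length (q @ [b])"
      show "((q @ [b]) ! i, (q @ [b]) ! Suc i) \<in> E"
      proof (cases "Suc i < length q")
        case True then show ?thesis using a(1)[unfolded ppath_def] by (simp add: nth_append)
      next
        case False
        then have "i = length q - 1" "Suc i = length q" using i by auto
        then show ?thesis using a(2) \<open>q \<noteq> []\<close> by (simp add: nth_append last_conv_nth)
      qed
    qed
  qed
qed

lemma ppath_nth: "ppath E p \<Longrightarrow> Suc i < length p \<Longrightarrow> (p ! i, p ! Suc i) \<in> E"
  by (simp add: ppath_def)

lemma ppath_rtrancl: "ppath E p \<Longrightarrow> i \<le> j \<Longrightarrow> j < length p \<Longrightarrow> (p ! i, p ! j) \<in> E\<^sup>*"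
proof (induction j)
  case 0 then show ?case by simp
next
  case (Suc j)
  show ?case
  proof (cases "i \<le> j")
    case True
    then have "(p ! i, p ! j) \<in> E\<^sup>*" using Suc by simp
    moreover have "(p ! j, p ! Suc j) \<in> E" using ppath_nth Suc by blast
    ultimately show ?thesis by simp
  next
    case False then have "i = Suc j" using Suc by simp
    then show ?thesis by simp
  qed
qed

lemma inv_ind:
  assumes "Q 0" "\<And>i. Suc i < length p \<Longrightarrow> Q i \<Longrightarrow> Q (Suc i)" "i < length p"
  shows "Q i"
  using assms(3)
proof (induction i)
  case 0 then show ?case using assms(1) by simp
next
  case (Suc i) then show ?case using assms(2) by simp
qed

lemma lin_on_comp: "lin_on A f \<Longrightarrow> (\<And>x. x \<in> A \<Longrightarrow> f x \<in> B) \<Longrightarrow> lin_on B g \<Longrightarrow> lin_on A (\<lambda>x. g (f x))"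
  unfolding lin_on_def by simp

lemma lin_on_uminus: "lin_on A f \<Longrightarrow> lin_on A (\<lambda>x. - f x)"
  unfolding lin_on_def by (simp add: scaleR_right.minus)

lemma lin_on_id: "lin_on A (\<lambda>x. x)" unfolding lin_on_def by simp

lemma pidx_snoc: "q \<noteq> [] \<Longrightarrow> pidx st (q @ [b]) x = st (last q) b (pidx st q x)"
proof (induction q arbitrary: x)
  case Nil then show ?case by simp
next
  case (Cons a q)
  show ?case
  proof (cases q)
    case Nil then show ?thesis by simp
  next
    case (Cons c r)
    then show ?thesis using Cons.IH[of "st a c x"] by simp
  qed
qed

lemma pidx_cons: "q \<noteq> [] \<Longrightarrow> pidx st (a # q) x = pidx st q (st a (hd q) x)"
  by (cases q) auto

context MC begin

abbreviation "E \<equiv> medges I C d M"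
abbreviation "st \<equiv> mstep I C d M"
abbreviation "Gam \<equiv> Gamma I C d M"
abbreviation "mp \<equiv> mpaths I C d M"

lemma mp_def: "mp \<alpha> \<beta> = {p. p \<noteq> [] \<and> hd p = \<alpha> \<and> last p = \<beta> \<and> ppath E p}"
  unfolding mpaths_def ppath_def by simp

lemma E_cases:
  assumes "(a, b) \<in> E"
  shows "(\<exists>k. a \<in> I (Suc k) \<and> b \<in> I k \<and> (a, b) \<in> edges I C d \<and> (a, b) \<notin> M) \<or>
         (\<exists>k. b \<in> I (Suc k) \<and> a \<in> I k \<and> (b, a) \<in> M)"
  using assms M_lev edgesD unfolding medges_def by blast

lemma E_inI: "(a, b) \<in> E \<Longrightarrow> (\<exists>k. a \<in> I k) \<and> (\<exists>k. b \<in> I k)"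
  using E_cases by blast

lemma st_rev: "(b, a) \<in> M \<Longrightarrow> st a b x = - blk_inv I C d a b x"
  unfolding mstep_def by simp

lemma st_ord: "(b, a) \<notin> M \<Longrightarrow> st a b x = blk I C d b a x"
  unfolding mstep_def by simp

lemma st_props:
  assumes "(a, b) \<in> E"
  shows "lin_on (C a) (st a b) \<and> (\<forall>x\<in>C a. st a b x \<in> C b)"
  using E_cases[OF assms]
proof
  assume "\<exists>k. a \<in> I (Suc k) \<and> b \<in> I k \<and> (a, b) \<in> edges I C d \<and> (a, b) \<notin> M"
  then obtain k where k: "a \<in> I (Suc k)" "b \<in> I k" by blast
  have "(b, a) \<notin> M"
  proof
    assume "(b, a) \<in> M"
    then obtain k' where "b \<in> I (Suc k')" "a \<in> I k'" using M_lev by blast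
    then have "k' = Suc k" using k inI_unique by blast
    then have "Suc (Suc k) = k" using k inI_unique \<open>b \<in> I (Suc k')\<close> by blast
    then show False by simp
  qed
  then have "st a b = blk I C d b a" by (simp add: fun_eq_iff st_ord)
  then show ?thesis using blk_lin[OF k] blk_in[OF k] by simp
next
  assume "\<exists>k. b \<in> I (Suc k) \<and> a \<in> I k \<and> (b, a) \<in> M"
  then have M: "(b, a) \<in> M" by blast
  then have "st a b = (\<lambda>x. - blk_inv I C d a b x)" by (simp add: fun_eq_iff st_rev)
  then show ?thesis using lin_on_uminus[OF blk_inv_lin[OF M]] blk_inv_prop[OF M] C_neg by simp
qed

lemma pidx_props:
  assumes "ppath E p" "p \<noteq> []"
  shows "lin_on (C (hd p)) (pidx st p) \<and> (\<forall>x\<in>C (hd p). pidx st p x \<in> C (last p))"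
  using assms
proof (induction p)
  case Nil then show ?case by simp
next
  case (Cons a q)
  show ?case
  proof (cases "q = []")
    case True
    then show ?thesis by (simp add: lin_on_id)
  next
    case False
    have e: "(a, hd q) \<in> E" and pq: "ppath E q" using Cons.prems False by (auto simp: ppath_Cons)
    note IH = Cons.IH[OF pq False]
    note S = st_props[OF e]
    have eq: "pidx st (a # q) = (\<lambda>x. pidx st q (st a (hd q) x))"
      using False by (simp add: fun_eq_iff pidx_cons)
    show ?thesis unfolding eq using lin_on_comp[of "C a" "st a (hd q)" "C (hd q)" "pidx st q"] S IH False
      by simp
  qed
qed

lemma Gamma_eq: "Gam \<beta> \<alpha> x = (\<Sum>p\<in>mp \<alpha> \<beta>. pidx st p x)"
  unfolding Gamma_def by simp

lemma Gamma_in: "x \<in> C \<alpha> \<Longrightarrow> Gam \<beta> \<alpha> x \<in> C \<beta>"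
  unfolding Gamma_eq
  by (rule C_sum) (use pidx_props in \<open>auto simp: mp_def\<close>)

lemma Gamma_lin: "lin_on (C \<alpha>) (Gam \<beta> \<alpha>)"
  unfolding lin_on_def Gamma_eq
proof (intro conjI ballI allI)
  fix x y assume xy: "x \<in> C \<alpha>" "y \<in> C \<alpha>"
  have "(\<Sum>p\<in>mp \<alpha> \<beta>. pidx st p (x + y)) = (\<Sum>p\<in>mp \<alpha> \<beta>. pidx st p x + pidx st p y)"
  proof (rule sum.cong[OF refl])
    fix p assume "p \<in> mp \<alpha> \<beta>"
    then have "ppath E p" "p \<noteq> []" "hd p = \<alpha>" by (auto simp: mp_def)
    then show "pidx st p (x + y) = pidx st p x + pidx st p y"
      using lin_onD(1)[OF conjunct1[OF pidx_props], of p x y] xy by simp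
  qed
  then show "(\<Sum>p\<in>mp \<alpha> \<beta>. pidx st p (x + y)) = (\<Sum>p\<in>mp \<alpha> \<beta>. pidx st p x) + (\<Sum>p\<in>mp \<alpha> \<beta>. pidx st p y)"
    by (simp add: sum.distrib)
next
  fix c x assume x: "x \<in> C \<alpha>"
  have "(\<Sum>p\<in>mp \<alpha> \<beta>. pidx st p (c *\<^sub>R x)) = (\<Sum>p\<in>mp \<alpha> \<beta>. c *\<^sub>R pidx st p x)"
  proof (rule sum.cong[OF refl])
    fix p assume "p \<in> mp \<alpha> \<beta>"
    then have "ppath E p" "p \<noteq> []" "hd p = \<alpha>" by (auto simp: mp_def)
    then show "pidx st p (c *\<^sub>R x) = c *\<^sub>R pidx st p x"
      using lin_onD(2)[OF conjunct1[OF pidx_props], of p x c] x by simp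
  qed
  then show "(\<Sum>p\<in>mp \<alpha> \<beta>. pidx st p (c *\<^sub>R x)) = c *\<^sub>R (\<Sum>p\<in>mp \<alpha> \<beta>. pidx st p x)"
    by (simp add: scaleR_sum_right)
qed

lemma Gamma_0: "Gam \<beta> \<alpha> 0 = 0"
  using lin_on_0[OF Gamma_lin C0] .

lemma Gamma_neg: "x \<in> C \<alpha> \<Longrightarrow> Gam \<beta> \<alpha> (- x) = - Gam \<beta> \<alpha> x"
  using lin_on_neg[OF Gamma_lin] .

lemma Gamma_empty: "mp \<alpha> \<beta> = {} \<Longrightarrow> Gam \<beta> \<alpha> x = 0"
  unfolding Gamma_eq by simp

lemma st_0: "(a, b) \<in> E \<Longrightarrow> st a b 0 = 0"
  using st_props lin_on_0 C0 by blast

lemma nodes_in_I: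
  assumes "ppath E p" "2 \<le> length p" "i < length p"
  shows "\<exists>k. p ! i \<in> I k"
proof (cases "Suc i < length p")
  case True then show ?thesis using ppath_nth[OF assms(1) True] E_inI by blast
next
  case False
  then have "Suc (i - 1) < length p" "Suc (i - 1) = i" using assms by auto
  then show ?thesis using ppath_nth[OF assms(1), of "i - 1"] E_inI by metis
qed

lemma reach_bound:
  assumes "ppath E p" "p ! 0 \<in> I j" "i < length p"
  shows "\<exists>k. p ! i \<in> I k \<and> (k \<le> j \<or> (k = Suc j \<and> p ! i \<in> Domain M))"
proof (rule inv_ind[of _ p, OF _ _ assms(3)])
  show "\<exists>k. p ! 0 \<in> I k \<and> (k \<le> j \<or> (k = Suc j \<and> p ! 0 \<in> Domain M))" using assms(2) by blast
next
  fix i assume i: "Suc i < length p" and "\<exists>k. p ! i \<in> I k \<and> (k \<le> j \<or> (k = Suc j \<and> p ! i \<in> Domain M))"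
  then obtain k where k: "p ! i \<in> I k" "k \<le> j \<or> (k = Suc j \<and> p ! i \<in> Domain M)" by blast
  show "\<exists>k. p ! Suc i \<in> I k \<and> (k \<le> j \<or> (k = Suc j \<and> p ! Suc i \<in> Domain M))"
    using E_cases[OF ppath_nth[OF assms(1) i]]
  proof
    assume "\<exists>k'. p ! i \<in> I (Suc k') \<and> p ! Suc i \<in> I k' \<and> (p ! i, p ! Suc i) \<in> edges I C d \<and> (p ! i, p ! Suc i) \<notin> M"
    then obtain k' where k': "p ! i \<in> I (Suc k')" "p ! Suc i \<in> I k'" by blast
    then have "k = Suc k'" using k(1) inI_unique by blast
    then have "k' \<le> j" using k(2) by auto
    then show ?thesis using k'(2) by blast
  next
    assume "\<exists>k'. p ! Suc i \<in> I (Suc k') \<and> p ! i \<in> I k' \<and> (p ! Suc i, p ! i) \<in> M"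
    then obtain k' where k': "p ! Suc i \<in> I (Suc k')" "p ! i \<in> I k'" "(p ! Suc i, p ! i) \<in> M" by blast
    then have "k' = k" using k inI_unique by blast
    moreover have "p ! i \<in> Range M" "p ! Suc i \<in> Domain M" using k' by blast+
    moreover have "\<not> (k = Suc j \<and> p ! i \<in> Domain M)" using DR_disj \<open>p ! i \<in> Range M\<close> by blast
    ultimately have "Suc k' \<le> j \<or> Suc k' = Suc j" using k(2) by auto
    then show ?thesis using k'(1) \<open>p ! Suc i \<in> Domain M\<close> by blast
  qed
qed

lemma reach_bound2:
  assumes "ppath E p" "p ! 0 \<in> I j" "p ! 0 \<notin> Range M" "i < length p"
  shows "\<exists>k. p ! i \<in> I k \<and> (k < j \<or> (k = j \<and> p ! i \<notin> Range M))"
proof (rule inv_ind[of _ p, OF _ _ assms(4)])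
  show "\<exists>k. p ! 0 \<in> I k \<and> (k < j \<or> (k = j \<and> p ! 0 \<notin> Range M))" using assms(2,3) by blast
next
  fix i assume i: "Suc i < length p" and "\<exists>k. p ! i \<in> I k \<and> (k < j \<or> (k = j \<and> p ! i \<notin> Range M))"
  then obtain k where k: "p ! i \<in> I k" "k < j \<or> (k = j \<and> p ! i \<notin> Range M)" by blast
  show "\<exists>k. p ! Suc i \<in> I k \<and> (k < j \<or> (k = j \<and> p ! Suc i \<notin> Range M))"
    using E_cases[OF ppath_nth[OF assms(1) i]]
  proof
    assume "\<exists>k'. p ! i \<in> I (Suc k') \<and> p ! Suc i \<in> I k' \<and> (p ! i, p ! Suc i) \<in> edges I C d \<and> (p ! i, p ! Suc i) \<notin> M"
    then obtain k' where k': "p ! i \<in> I (Suc k')" "p ! Suc i \<in> I k'" by blast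
    then have "k = Suc k'" using k(1) inI_unique by blast
    then have "k' < j" using k(2) by auto
    then show ?thesis using k'(2) by blast
  next
    assume "\<exists>k'. p ! Suc i \<in> I (Suc k') \<and> p ! i \<in> I k' \<and> (p ! Suc i, p ! i) \<in> M"
    then obtain k' where k': "p ! Suc i \<in> I (Suc k')" "p ! i \<in> I k'" "(p ! Suc i, p ! i) \<in> M" by blast
    then have "k' = k" using k inI_unique by blast
    moreover have "p ! i \<in> Range M" "p ! Suc i \<in> Domain M" using k' by blast+
    moreover have "p ! Suc i \<notin> Range M" using DR_disj \<open>p ! Suc i \<in> Domain M\<close> by blast
    ultimately have "k < j" using k(2) \<open>p ! i \<in> Range M\<close> by auto
    then have "Suc k' < j \<or> Suc k' = j" using \<open>k' = k\<close> by auto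
    then show ?thesis using k'(1) \<open>p ! Suc i \<notin> Range M\<close> by blast
  qed
qed

lemma reach_free:
  assumes "nfree I M n" "ppath E p" "p ! 0 \<in> I j" "j < n" "i < length p"
  shows "\<exists>k. p ! i \<in> I k \<and> k < n"
proof (rule inv_ind[of _ p, OF _ _ assms(5)])
  show "\<exists>k. p ! 0 \<in> I k \<and> k < n" using assms(3,4) by blast
next
  fix i assume i: "Suc i < length p" and "\<exists>k. p ! i \<in> I k \<and> k < n"
  then obtain k where k: "p ! i \<in> I k" "k < n" by blast
  show "\<exists>k. p ! Suc i \<in> I k \<and> k < n"
    using E_cases[OF ppath_nth[OF assms(2) i]]
  proof
    assume "\<exists>k'. p ! i \<in> I (Suc k') \<and> p ! Suc i \<in> I k' \<and> (p ! i, p ! Suc i) \<in> edges I C d \<and> (p ! i, p ! Suc i) \<notin> M"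
    then obtain k' where k': "p ! i \<in> I (Suc k')" "p ! Suc i \<in> I k'" by blast
    then have "k = Suc k'" using k(1) inI_unique by blast
    then have "k' < n" using k(2) by auto
    then show ?thesis using k'(2) by blast
  next
    assume "\<exists>k'. p ! Suc i \<in> I (Suc k') \<and> p ! i \<in> I k' \<and> (p ! Suc i, p ! i) \<in> M"
    then obtain k' where k': "p ! Suc i \<in> I (Suc k')" "p ! i \<in> I k'" "(p ! Suc i, p ! i) \<in> M" by blast
    then have "k' = k" using k inI_unique by blast
    moreover have "Suc k \<noteq> n"
    proof
      assume "Suc k = n"
      then show False using assms(1) k' \<open>k' = k\<close> unfolding nfree_def by blast
    qed
    ultimately have "Suc k' < n" using k(2) by auto
    then show ?thesis using k'(1) by blast
  qed
qed

lemma mp_last_level: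
  assumes "p \<in> mp \<alpha> \<beta>" "\<And>i. i < length p \<Longrightarrow> \<exists>k. p ! i \<in> I k \<and> P k" "\<beta> \<in> I k0"
  shows "P k0"
proof -
  have "p \<noteq> []" "last p = \<beta>" using assms(1) by (auto simp: mp_def)
  then have "p ! (length p - 1) = \<beta>" "length p - 1 < length p" by (auto simp: last_conv_nth)
  then show ?thesis using assms(2)[of "length p - 1"] assms(3) inI_unique by metis
qed

lemma mp_hd: "p \<in> mp \<alpha> \<beta> \<Longrightarrow> p ! 0 = \<alpha>"
  by (auto simp: mp_def hd_conv_nth)

lemma mp_ppath: "p \<in> mp \<alpha> \<beta> \<Longrightarrow> ppath E p"
  by (auto simp: mp_def)

lemma mp_empty1: "\<alpha> \<in> I j \<Longrightarrow> \<rho> \<in> I (Suc (Suc j)) \<Longrightarrow> mp \<alpha> \<rho> = {}"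
proof (rule ccontr)
  assume a: "\<alpha> \<in> I j" "\<rho> \<in> I (Suc (Suc j))" "mp \<alpha> \<rho> \<noteq> {}"
  then obtain p where p: "p \<in> mp \<alpha> \<rho>" by blast
  have "(\<lambda>k. k \<le> j \<or> k = Suc j) (Suc (Suc j))"
    by (rule mp_last_level[OF p _ a(2)]) (use reach_bound[OF mp_ppath[OF p], of j] mp_hd[OF p] a(1) in blast)
  then show False by simp
qed

lemma mp_empty2: "\<gamma> \<in> I j \<Longrightarrow> \<gamma> \<notin> Range M \<Longrightarrow> \<rho> \<in> I (Suc j) \<Longrightarrow> mp \<gamma> \<rho> = {}"
proof (rule ccontr)
  assume a: "\<gamma> \<in> I j" "\<gamma> \<notin> Range M" "\<rho> \<in> I (Suc j)" "mp \<gamma> \<rho> \<noteq> {}"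
  then obtain p where p: "p \<in> mp \<gamma> \<rho>" by blast
  have "\<exists>k. p ! i \<in> I k \<and> k \<le> j" if ilen: "i < length p" for i
  proof -
    have h: "p ! 0 \<in> I j" "p ! 0 \<notin> Range M" using mp_hd[OF p] a(1,2) by auto
    obtain k where "p ! i \<in> I k" "k < j \<or> (k = j \<and> p ! i \<notin> Range M)"
      using reach_bound2[OF mp_ppath[OF p] h ilen] by blast
    then show ?thesis by (intro exI[of _ k]) auto
  qed
  then have "(\<lambda>k. k \<le> j) (Suc j)"
    by (rule mp_last_level[OF p _ a(3)])
  then show False by simp
qed

lemma mp_empty3: "nfree I M n \<Longrightarrow> \<alpha> \<in> I j \<Longrightarrow> j < n \<Longrightarrow> \<rho> \<in> I n \<Longrightarrow> mp \<alpha> \<rho> = {}"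
proof (rule ccontr)
  assume a: "nfree I M n" "\<alpha> \<in> I j" "j < n" "\<rho> \<in> I n" "mp \<alpha> \<rho> \<noteq> {}"
  then obtain p where p: "p \<in> mp \<alpha> \<rho>" by blast
  have "\<exists>k. p ! i \<in> I k \<and> k < n" if ilen: "i < length p" for i
  proof -
    have h: "p ! 0 \<in> I j" using mp_hd[OF p] a(2) by auto
    show ?thesis using reach_free[OF a(1) mp_ppath[OF p] h a(3) ilen] .
  qed
  then have "(\<lambda>k. k < n) n"
    by (rule mp_last_level[OF p _ a(4)])
  then show False by simp
qed

end

context MC begin

lemma rtrancl_mp: "(a, b) \<in> E\<^sup>* \<Longrightarrow> mp a b \<noteq> {}"
proof (induction rule: rtrancl_induct)
  case base
  have "[a] \<in> mp a a" by (simp add: mp_def)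
  then show ?case by blast
next
  case (step b c)
  then obtain p where p: "p \<in> mp a b" by blast
  then have "p @ [c] \<in> mp a c" using step(2) by (auto simp: mp_def ppath_snoc)
  then show ?case by blast
qed

lemma no_cycle:
  assumes q: "ppath E q" "2 \<le> length q" "q ! 0 = q ! (length q - 1)"
  shows False
proof -
  define N where "N = length q"
  have N2: "2 \<le> N" using q N_def by simp
  have lev: "\<exists>k. q ! i \<in> I k" if "i < N" for i using nodes_in_I[OF q(1,2)] that N_def by simp
  define L where "L = Max ((\<lambda>i. deg I (q ! i)) ` {..<N})"
  have fin: "finite ((\<lambda>i. deg I (q ! i)) ` {..<N})" by simp
  have "0 \<in> {..<N}" using N2 by simp
  then have ne: "(\<lambda>i. deg I (q ! i)) ` {..<N} \<noteq> {}" by blast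
  have leL: "k \<le> L" if "i < N" "q ! i \<in> I k" for i k
  proof -
    have "deg I (q ! i) \<le> L" unfolding L_def by (rule Max_ge[OF fin]) (use that in auto)
    then show ?thesis using deg_eq[OF that(2)] by simp
  qed
  obtain j0 where j0: "j0 < N" "deg I (q ! j0) = L"
    using Max_in[OF fin ne] unfolding L_def[symmetric] by auto
  define i0 where "i0 = (if j0 = N - 1 then 0 else j0)"
  have i0: "i0 < N - 1" "q ! i0 = q ! j0" using j0 N2 q(3) N_def by (auto simp: i0_def)
  define v where "v = q ! i0"
  have "i0 < N" using i0(1) by simp
  then obtain kv where kv: "v \<in> I kv" using lev v_def by blast
  have vL: "v \<in> I L" using kv j0(2) i0(2) deg_eq[OF kv] v_def by simp
  define jw where "jw = (if i0 = 0 then N - 2 else i0 - 1)"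
  define w where "w = q ! jw"
  have jw: "jw < N" using N2 i0 by (auto simp: jw_def)
  have wv: "(w, v) \<in> E"
  proof (cases "i0 = 0")
    case True
    then have "(q ! (N - 2), q ! Suc (N - 2)) \<in> E" using ppath_nth[OF q(1), of "N - 2"] N2 N_def by simp
    moreover have "Suc (N - 2) = N - 1" using N2 by simp
    ultimately show ?thesis using True q(3) N_def by (simp add: w_def jw_def v_def)
  next
    case False
    then have "(q ! (i0 - 1), q ! Suc (i0 - 1)) \<in> E" using ppath_nth[OF q(1), of "i0 - 1"] i0 N_def by simp
    then show ?thesis using False by (simp add: w_def jw_def v_def)
  qed
  define u where "u = q ! Suc i0"
  have vu: "(v, u) \<in> E" using ppath_nth[OF q(1), of i0] i0 N_def by (simp add: u_def v_def)
  have "(u, q ! (N - 1)) \<in> E\<^sup>*" unfolding u_def by (rule ppath_rtrancl[OF q(1)]) (use i0 N_def in auto)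
  moreover have "(q ! 0, w) \<in> E\<^sup>*" unfolding w_def by (rule ppath_rtrancl[OF q(1)]) (use jw N_def in auto)
  ultimately have uw: "(u, w) \<in> E\<^sup>*" using q(3) N_def by simp
  have wu: "(w, u) \<in> E\<^sup>*" using wv vu by simp
  obtain kw where kw: "w \<in> I kw" using lev[OF jw] w_def by auto
  have "Suc i0 < N" using i0(1) by simp
  then obtain ku where ku: "u \<in> I ku" using lev u_def by blast
  have kwL: "kw \<le> L" using leL[OF jw] kw w_def by simp
  have kuL: "ku \<le> L" using leL[of "Suc i0"] i0 ku u_def by simp
  obtain k where k: "v \<in> I (Suc k)" "w \<in> I k" "(v, w) \<in> M"
    using E_cases[OF wv]
  proof
    assume "\<exists>k. w \<in> I (Suc k) \<and> v \<in> I k \<and> (w, v) \<in> edges I C d \<and> (w, v) \<notin> M"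
    then obtain k where "w \<in> I (Suc k)" "v \<in> I k" by blast
    then have "Suc k = kw" "k = L" using kw vL inI_unique by blast+
    then show ?thesis using kwL by simp
  qed blast
  have Lk: "L = Suc k" using k(1) vL inI_unique by blast
  have "u \<in> I k \<and> (v, u) \<notin> M"
    using E_cases[OF vu]
  proof
    assume "\<exists>k'. v \<in> I (Suc k') \<and> u \<in> I k' \<and> (v, u) \<in> edges I C d \<and> (v, u) \<notin> M"
    then obtain k' where k': "v \<in> I (Suc k')" "u \<in> I k'" "(v, u) \<notin> M" by blast
    then have "Suc k' = L" using vL inI_unique by blast
    then show ?thesis using k' Lk by simp
  next
    assume "\<exists>k'. u \<in> I (Suc k') \<and> v \<in> I k' \<and> (u, v) \<in> M"
    then obtain k' where "u \<in> I (Suc k')" "v \<in> I k'" by blast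
    then have "Suc k' = ku" "k' = L" using ku vL inI_unique by blast+
    then show ?thesis using kuL by simp
  qed
  then have uk: "u \<in> I k" and nM: "(v, u) \<notin> M" by auto
  have "u = w" by (rule antisym_mp[OF uk k(2) rtrancl_mp[OF uw] rtrancl_mp[OF wu]])
  then show False using nM k(3) by simp
qed

lemma ppath_distinct:
  assumes p: "ppath E p"
  shows "distinct p"
proof (rule ccontr)
  assume "\<not> distinct p"
  then obtain i j where ij: "i < length p" "j < length p" "i \<noteq> j" "p ! i = p ! j"
    by (auto simp: distinct_conv_nth)
  then obtain a b where ab: "a < b" "b < length p" "p ! a = p ! b"
    by (metis linorder_neqE_nat)
  define q where "q = take (Suc (b - a)) (drop a p)"
  have lq: "length q = Suc (b - a)" using ab by (simp add: q_def)
  have qn: "q ! t = p ! (a + t)" if "t \<le> b - a" for t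
    using that ab by (simp add: q_def)
  have "ppath E q" unfolding ppath_def
  proof (intro allI impI)
    fix t assume "Suc t < length q"
    then have "t \<le> b - a" "Suc t \<le> b - a" "Suc (a + t) < length p" using lq ab by auto
    then show "(q ! t, q ! Suc t) \<in> E" using qn ppath_nth[OF p, of "a + t"] by simp
  qed
  moreover have "2 \<le> length q" using lq ab by simp
  moreover have "q ! 0 = q ! (length q - 1)" using qn[of 0] qn[of "b - a"] lq ab by simp
  ultimately show False by (rule no_cycle)
qed

lemma mp_finite: "finite (mp \<alpha> \<beta>)"
proof (cases "\<exists>j. \<alpha> \<in> I j")
  case True
  then obtain j where j: "\<alpha> \<in> I j" by blast
  define V where "V = (\<Union>k\<in>{..Suc j}. I k)"
  have fV: "finite V" unfolding V_def by (simp add: finI)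
  have "mp \<alpha> \<beta> \<subseteq> {xs. set xs \<subseteq> V \<and> length xs \<le> card V}"
  proof
    fix p assume p: "p \<in> mp \<alpha> \<beta>"
    have sV: "set p \<subseteq> V"
    proof
      fix x assume "x \<in> set p"
      then obtain i where i: "i < length p" "p ! i = x" by (auto simp: in_set_conv_nth)
      have h: "p ! 0 \<in> I j" using mp_hd[OF p] j by simp
      obtain k where "p ! i \<in> I k" "k \<le> j \<or> (k = Suc j \<and> p ! i \<in> Domain M)"
        using reach_bound[OF mp_ppath[OF p] h i(1)] by blast
      then show "x \<in> V" unfolding V_def using i(2) by auto
    qed
    have "length p = card (set p)" using distinct_card[OF ppath_distinct[OF mp_ppath[OF p]]] by simp
    also have "\<dots> \<le> card V" by (rule card_mono[OF fV sV])
    finally show "p \<in> {xs. set xs \<subseteq> V \<and> length xs \<le> card V}" using sV by simp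
  qed
  then show ?thesis using finite_lists_length_le[OF fV] finite_subset by blast
next
  case False
  have "mp \<alpha> \<beta> \<subseteq> {[\<alpha>]}"
  proof
    fix p assume p: "p \<in> mp \<alpha> \<beta>"
    have "length p < 2"
    proof (rule ccontr)
      assume "\<not> length p < 2"
      moreover have "p \<noteq> []" using p by (simp add: mp_def)
      ultimately have "\<exists>k. p ! 0 \<in> I k" using nodes_in_I[OF mp_ppath[OF p], of 0] by simp
      then show False using False mp_hd[OF p] by simp
    qed
    moreover have "p \<noteq> []" "hd p = \<alpha>" using p by (auto simp: mp_def)
    ultimately show "p \<in> {[\<alpha>]}" by (cases p) auto
  qed
  then show ?thesis using finite_subset by blast
qed

lemma Nin_finite: "finite {\<delta>. (\<delta>, \<beta>) \<in> E}"
proof -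
  have "{\<delta>. (\<delta>, \<beta>) \<in> E} \<subseteq> (\<Union>k\<in>{..Suc (deg I \<beta>)}. I k)"
  proof
    fix \<delta> assume "\<delta> \<in> {\<delta>. (\<delta>, \<beta>) \<in> E}"
    then have e: "(\<delta>, \<beta>) \<in> E" by simp
    show "\<delta> \<in> (\<Union>k\<in>{..Suc (deg I \<beta>)}. I k)"
      using E_cases[OF e]
    proof
      assume "\<exists>k. \<delta> \<in> I (Suc k) \<and> \<beta> \<in> I k \<and> (\<delta>, \<beta>) \<in> edges I C d \<and> (\<delta>, \<beta>) \<notin> M"
      then obtain k where "\<delta> \<in> I (Suc k)" "\<beta> \<in> I k" by blast
      then show ?thesis using deg_eq by auto
    next
      assume "\<exists>k. \<beta> \<in> I (Suc k) \<and> \<delta> \<in> I k \<and> (\<beta>, \<delta>) \<in> M"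
      then obtain k where "\<beta> \<in> I (Suc k)" "\<delta> \<in> I k" by blast
      then show ?thesis using deg_eq by auto
    qed
  qed
  then show ?thesis using finite_subset finI by (metis finite_UN_I finite_atMost)
qed

lemma Nout_finite: "finite {\<nu>. (\<alpha>, \<nu>) \<in> E}"
proof -
  have "{\<nu>. (\<alpha>, \<nu>) \<in> E} \<subseteq> (\<Union>k\<in>{..Suc (deg I \<alpha>)}. I k)"
  proof
    fix \<nu> assume "\<nu> \<in> {\<nu>. (\<alpha>, \<nu>) \<in> E}"
    then have e: "(\<alpha>, \<nu>) \<in> E" by simp
    show "\<nu> \<in> (\<Union>k\<in>{..Suc (deg I \<alpha>)}. I k)"
      using E_cases[OF e]
    proof
      assume "\<exists>k. \<alpha> \<in> I (Suc k) \<and> \<nu> \<in> I k \<and> (\<alpha>, \<nu>) \<in> edges I C d \<and> (\<alpha>, \<nu>) \<notin> M"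
      then obtain k where "\<alpha> \<in> I (Suc k)" "\<nu> \<in> I k" by blast
      then show ?thesis using deg_eq by auto
    next
      assume "\<exists>k. \<nu> \<in> I (Suc k) \<and> \<alpha> \<in> I k \<and> (\<nu>, \<alpha>) \<in> M"
      then obtain k where "\<nu> \<in> I (Suc k)" "\<alpha> \<in> I k" by blast
      then show ?thesis using deg_eq by auto
    qed
  qed
  then show ?thesis using finite_subset finI by (metis finite_UN_I finite_atMost)
qed

lemma mp_last_eq:
  "mp \<alpha> \<beta> = (if \<alpha> = \<beta> then {[\<alpha>]} else {}) \<union> (\<Union>\<delta>\<in>{\<delta>. (\<delta>, \<beta>) \<in> E}. (\<lambda>q. q @ [\<beta>]) ` mp \<alpha> \<delta>)"
  (is "?L = ?A \<union> ?B")
proof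
  show "?L \<subseteq> ?A \<union> ?B"
  proof
    fix p assume p: "p \<in> ?L"
    then have p1: "p \<noteq> []" "hd p = \<alpha>" "last p = \<beta>" "ppath E p" by (auto simp: mp_def)
    show "p \<in> ?A \<union> ?B"
    proof (cases "butlast p = []")
      case True
      have "p = [last p]" using True append_butlast_last_id[OF p1(1)] by simp
      then have "p = [\<alpha>]" using p1(2) by (metis list.sel(1))
      then show ?thesis using p1 by auto
    next
      case False
      have pe: "p = butlast p @ [\<beta>]" using append_butlast_last_id[OF p1(1)] p1(3) by simp
      then have "ppath E (butlast p @ [\<beta>])" using p1 by simp
      then have pp: "ppath E (butlast p)" "(last (butlast p), \<beta>) \<in> E" using False by (auto simp: ppath_snoc)
      have "hd (butlast p) = \<alpha>" using p1 False by (metis hd_append2 pe)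
      then have "butlast p \<in> mp \<alpha> (last (butlast p))" using pp False by (simp add: mp_def)
      then show ?thesis using pp pe by blast
    qed
  qed
next
  show "?A \<union> ?B \<subseteq> ?L"
  proof
    fix p assume "p \<in> ?A \<union> ?B"
    then show "p \<in> ?L"
    proof
      assume "p \<in> ?A" then show ?thesis by (auto simp: mp_def split: if_splits)
    next
      assume "p \<in> ?B"
      then obtain \<delta> q where "(\<delta>, \<beta>) \<in> E" "q \<in> mp \<alpha> \<delta>" "p = q @ [\<beta>]" by blast
      then show ?thesis by (auto simp: mp_def ppath_snoc)
    qed
  qed
qed

lemma Gamma_last:
  assumes x: "x \<in> C \<alpha>"
  shows "Gam \<beta> \<alpha> x = (if \<alpha> = \<beta> then x else 0) + (\<Sum>\<delta>\<in>{\<delta>. (\<delta>, \<beta>) \<in> E}. st \<delta> \<beta> (Gam \<delta> \<alpha> x))"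
proof -
  let ?A = "(if \<alpha> = \<beta> then {[\<alpha>]} else {})"
  let ?N = "{\<delta>. (\<delta>, \<beta>) \<in> E}"
  let ?F = "\<lambda>\<delta>. (\<lambda>q. q @ [\<beta>]) ` mp \<alpha> \<delta>"
  have fA: "finite ?A" by simp
  have fB: "finite (\<Union>\<delta>\<in>?N. ?F \<delta>)" using Nin_finite mp_finite by blast
  have dis: "?A \<inter> (\<Union>\<delta>\<in>?N. ?F \<delta>) = {}"
  proof -
    have L2: "length p \<ge> 2" if "p \<in> (\<Union>\<delta>\<in>?N. ?F \<delta>)" for p
      using that by (auto simp: mp_def Suc_le_eq)
    have "\<not> (2 \<le> length [\<alpha>])" by simp
    then have nin: "[\<alpha>] \<notin> (\<Union>\<delta>\<in>?N. ?F \<delta>)" using L2 by blast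
    have sub: "?A \<subseteq> {[\<alpha>]}" by simp
    show ?thesis
    proof (rule equals0I)
      fix p assume p: "p \<in> ?A \<inter> (\<Union>\<delta>\<in>?N. ?F \<delta>)"
      then have "p = [\<alpha>]" using sub by auto
      then show False using p nin by simp
    qed
  qed
  have "Gam \<beta> \<alpha> x = (\<Sum>p\<in>?A. pidx st p x) + (\<Sum>p\<in>(\<Union>\<delta>\<in>?N. ?F \<delta>). pidx st p x)"
    unfolding Gamma_eq by (subst mp_last_eq) (rule sum.union_disjoint[OF fA fB dis])
  also have "(\<Sum>p\<in>?A. pidx st p x) = (if \<alpha> = \<beta> then x else 0)" by simp
  also have "(\<Sum>p\<in>(\<Union>\<delta>\<in>?N. ?F \<delta>). pidx st p x) = (\<Sum>\<delta>\<in>?N. \<Sum>p\<in>?F \<delta>. pidx st p x)"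
  proof (rule sum.UNION_disjoint)
    show "finite ?N" by (rule Nin_finite)
    show "\<forall>\<delta>\<in>?N. finite (?F \<delta>)" using mp_finite by blast
    show "\<forall>\<delta>\<in>?N. \<forall>\<delta>'\<in>?N. \<delta> \<noteq> \<delta>' \<longrightarrow> ?F \<delta> \<inter> ?F \<delta>' = {}"
      by (auto simp: mp_def)
  qed
  also have "\<dots> = (\<Sum>\<delta>\<in>?N. st \<delta> \<beta> (Gam \<delta> \<alpha> x))"
  proof (rule sum.cong[OF refl])
    fix \<delta> assume "\<delta> \<in> ?N"
    then have e: "(\<delta>, \<beta>) \<in> E" by simp
    have "(\<Sum>p\<in>?F \<delta>. pidx st p x) = (\<Sum>q\<in>mp \<alpha> \<delta>. pidx st (q @ [\<beta>]) x)"
      by (rule sum.reindex_cong[of "\<lambda>q. q @ [\<beta>]"]) (auto simp: inj_on_def)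
    also have "\<dots> = (\<Sum>q\<in>mp \<alpha> \<delta>. st \<delta> \<beta> (pidx st q x))"
      by (rule sum.cong[OF refl]) (auto simp: mp_def pidx_snoc)
    also have "\<dots> = st \<delta> \<beta> (\<Sum>q\<in>mp \<alpha> \<delta>. pidx st q x)"
    proof (rule lin_on_sum[OF conjunct1[OF st_props[OF e]] subC, symmetric])
      fix q assume q: "q \<in> mp \<alpha> \<delta>"
      then have "ppath E q" "q \<noteq> []" "hd q = \<alpha>" "last q = \<delta>" by (auto simp: mp_def)
      then show "pidx st q x \<in> C \<delta>" using pidx_props x by metis
    qed
    finally show "(\<Sum>p\<in>?F \<delta>. pidx st p x) = st \<delta> \<beta> (Gam \<delta> \<alpha> x)" by (simp add: Gamma_eq)
  qed
  finally show ?thesis .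
qed

lemma mp_first_eq:
  "mp \<alpha> \<beta> = (if \<alpha> = \<beta> then {[\<alpha>]} else {}) \<union> (\<Union>\<nu>\<in>{\<nu>. (\<alpha>, \<nu>) \<in> E}. (\<lambda>q. \<alpha> # q) ` mp \<nu> \<beta>)"
  (is "?L = ?A \<union> ?B")
proof
  show "?L \<subseteq> ?A \<union> ?B"
  proof
    fix p assume p: "p \<in> ?L"
    then have p1: "p \<noteq> []" "hd p = \<alpha>" "last p = \<beta>" "ppath E p" by (auto simp: mp_def)
    then obtain q where pe: "p = \<alpha> # q" by (cases p) auto
    show "p \<in> ?A \<union> ?B"
    proof (cases "q = []")
      case True
      then show ?thesis using p1 pe by auto
    next
      case False
      have pp: "(\<alpha>, hd q) \<in> E" "ppath E q" using p1(4) pe False by (auto simp: ppath_Cons)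
      have "last q = \<beta>" using p1 pe False by simp
      then have "q \<in> mp (hd q) \<beta>" using pp False by (simp add: mp_def)
      then show ?thesis using pp pe by blast
    qed
  qed
next
  show "?A \<union> ?B \<subseteq> ?L"
  proof
    fix p assume "p \<in> ?A \<union> ?B"
    then show "p \<in> ?L"
    proof
      assume "p \<in> ?A" then show ?thesis by (auto simp: mp_def split: if_splits)
    next
      assume "p \<in> ?B"
      then obtain \<nu> q where "(\<alpha>, \<nu>) \<in> E" "q \<in> mp \<nu> \<beta>" "p = \<alpha> # q" by blast
      then show ?thesis by (auto simp: mp_def ppath_Cons)
    qed
  qed
qed

lemma Gamma_first:
  "Gam \<beta> \<alpha> x = (if \<alpha> = \<beta> then x else 0) + (\<Sum>\<nu>\<in>{\<nu>. (\<alpha>, \<nu>) \<in> E}. Gam \<beta> \<nu> (st \<alpha> \<nu> x))"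
proof -
  let ?A = "(if \<alpha> = \<beta> then {[\<alpha>]} else {})"
  let ?N = "{\<nu>. (\<alpha>, \<nu>) \<in> E}"
  let ?F = "\<lambda>\<nu>. (\<lambda>q. \<alpha> # q) ` mp \<nu> \<beta>"
  have fA: "finite ?A" by simp
  have fB: "finite (\<Union>\<nu>\<in>?N. ?F \<nu>)" using Nout_finite mp_finite by blast
  have dis: "?A \<inter> (\<Union>\<nu>\<in>?N. ?F \<nu>) = {}"
  proof -
    have L2: "length p \<ge> 2" if "p \<in> (\<Union>\<nu>\<in>?N. ?F \<nu>)" for p
      using that by (auto simp: mp_def Suc_le_eq)
    have "\<not> (2 \<le> length [\<alpha>])" by simp
    then have nin: "[\<alpha>] \<notin> (\<Union>\<nu>\<in>?N. ?F \<nu>)" using L2 by blast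
    have sub: "?A \<subseteq> {[\<alpha>]}" by simp
    show ?thesis
    proof (rule equals0I)
      fix p assume p: "p \<in> ?A \<inter> (\<Union>\<nu>\<in>?N. ?F \<nu>)"
      then have "p = [\<alpha>]" using sub by auto
      then show False using p nin by simp
    qed
  qed
  have "Gam \<beta> \<alpha> x = (\<Sum>p\<in>?A. pidx st p x) + (\<Sum>p\<in>(\<Union>\<nu>\<in>?N. ?F \<nu>). pidx st p x)"
    unfolding Gamma_eq by (subst mp_first_eq) (rule sum.union_disjoint[OF fA fB dis])
  also have "(\<Sum>p\<in>?A. pidx st p x) = (if \<alpha> = \<beta> then x else 0)" by simp
  also have "(\<Sum>p\<in>(\<Union>\<nu>\<in>?N. ?F \<nu>). pidx st p x) = (\<Sum>\<nu>\<in>?N. \<Sum>p\<in>?F \<nu>. pidx st p x)"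
  proof (rule sum.UNION_disjoint)
    show "finite ?N" by (rule Nout_finite)
    show "\<forall>\<nu>\<in>?N. finite (?F \<nu>)" using mp_finite by blast
    show "\<forall>\<nu>\<in>?N. \<forall>\<nu>'\<in>?N. \<nu> \<noteq> \<nu>' \<longrightarrow> ?F \<nu> \<inter> ?F \<nu>' = {}"
      by (auto simp: mp_def)
  qed
  also have "\<dots> = (\<Sum>\<nu>\<in>?N. Gam \<beta> \<nu> (st \<alpha> \<nu> x))"
  proof (rule sum.cong[OF refl])
    fix \<nu> assume "\<nu> \<in> ?N"
    have "(\<Sum>p\<in>?F \<nu>. pidx st p x) = (\<Sum>q\<in>mp \<nu> \<beta>. pidx st (\<alpha> # q) x)"
      by (rule sum.reindex_cong[of "\<lambda>q. \<alpha> # q"]) (auto simp: inj_on_def)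
    also have "\<dots> = (\<Sum>q\<in>mp \<nu> \<beta>. pidx st q (st \<alpha> \<nu> x))"
      by (rule sum.cong[OF refl]) (auto simp: mp_def pidx_cons)
    finally show "(\<Sum>p\<in>?F \<nu>. pidx st p x) = Gam \<beta> \<nu> (st \<alpha> \<nu> x)" by (simp add: Gamma_eq)
  qed
  finally show ?thesis .
qed

end

lemma lin_on_sum_fun: "(\<And>i. i \<in> S \<Longrightarrow> lin_on A (f i)) \<Longrightarrow> lin_on A (\<lambda>x. \<Sum>i\<in>S. f i x)"
  unfolding lin_on_def by (simp add: sum.distrib scaleR_sum_right)

lemma oproj_eq:
  assumes "t \<in> K" "\<forall>w\<in>K. inner (y - t) w = 0"
    "\<And>q. q \<in> K \<Longrightarrow> \<forall>w\<in>K. inner (y - q) w = 0 \<Longrightarrow> q = t"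
  shows "oproj K y = t"
  unfolding oproj_def
proof (rule the_equality)
  show "t \<in> K \<and> (\<forall>w\<in>K. inner (y - t) w = 0)" using assms(1,2) by (rule conjI)
next
  fix q assume "q \<in> K \<and> (\<forall>w\<in>K. inner (y - q) w = 0)"
  then show "q = t" using assms(3) by blast
qed

lemma oproj_zero:
  assumes "0 \<in> K" "\<forall>w\<in>K. inner y w = 0"
  shows "oproj K y = 0"
proof (rule oproj_eq)
  fix q assume q: "q \<in> K" "\<forall>w\<in>K. inner (y - q) w = 0"
  then have "inner (y - q) q = 0" "inner y q = 0" using assms by auto
  then have "inner q q = 0" by (simp add: inner_diff_left)
  then show "q = 0" by simp
qed (use assms in simp_all)

context MC begin

abbreviation "U \<equiv> unmatched M"
abbreviation "Ph \<equiv> Phi I C d M"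
abbreviation "Ps \<equiv> Psi I C d M"

lemma U_iff: "\<alpha> \<in> U \<longleftrightarrow> \<alpha> \<notin> Domain M \<and> \<alpha> \<notin> Range M"
  unfolding unmatched_def by simp

lemma Phi_eq: "Ph n x = (\<Sum>\<alpha>\<in>I n \<inter> U. \<Sum>\<beta>\<in>I n. Gam \<beta> \<alpha> (comp I C n \<alpha> x))"
  unfolding Phi_def by simp
lemma Psi_eq: "Ps n x = (\<Sum>\<alpha>\<in>I n. \<Sum>\<beta>\<in>I n \<inter> U. Gam \<beta> \<alpha> (comp I C n \<alpha> x))"
  unfolding Psi_def by simp

lemma Phi_lin: "lin_on (chains I C n) (Ph n)"
proof -
  have "lin_on (chains I C n) (\<lambda>x. \<Sum>\<alpha>\<in>I n \<inter> U. (\<lambda>y. \<Sum>\<beta>\<in>I n. Gam \<beta> \<alpha> y) (comp I C n \<alpha> x))"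
  proof (rule lin_on_sum_fun)
    fix \<alpha> show "lin_on (chains I C n) (\<lambda>x. (\<lambda>y. \<Sum>\<beta>\<in>I n. Gam \<beta> \<alpha> y) (comp I C n \<alpha> x))"
      by (rule lin_on_comp[OF comp_lin comp_in]) (auto intro: lin_on_sum_fun Gamma_lin)
  qed
  then show ?thesis unfolding Phi_def by simp
qed

lemma Psi_lin: "lin_on (chains I C n) (Ps n)"
proof -
  have "lin_on (chains I C n) (\<lambda>x. \<Sum>\<alpha>\<in>I n. (\<lambda>y. \<Sum>\<beta>\<in>I n \<inter> U. Gam \<beta> \<alpha> y) (comp I C n \<alpha> x))"
  proof (rule lin_on_sum_fun)
    fix \<alpha> show "lin_on (chains I C n) (\<lambda>x. (\<lambda>y. \<Sum>\<beta>\<in>I n \<inter> U. Gam \<beta> \<alpha> y) (comp I C n \<alpha> x))"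
      by (rule lin_on_comp[OF comp_lin comp_in]) (auto intro: lin_on_sum_fun Gamma_lin)
  qed
  then show ?thesis unfolding Psi_def by simp
qed

lemma Psi_in: "x \<in> chains I C n \<Longrightarrow> Ps n x \<in> mchains I C M n"
proof -
  assume x: "x \<in> chains I C n"
  have "Ps n x = (\<Sum>\<beta>\<in>I n \<inter> U. \<Sum>\<alpha>\<in>I n. Gam \<beta> \<alpha> (comp I C n \<alpha> x))"
    unfolding Psi_eq by (rule sum.swap)
  moreover have "\<forall>\<beta>\<in>I n \<inter> U. (\<Sum>\<alpha>\<in>I n. Gam \<beta> \<alpha> (comp I C n \<alpha> x)) \<in> C \<beta>"
    by (intro ballI C_sum Gamma_in comp_in[OF x])
  ultimately show ?thesis unfolding mchains_def chains_def
    by (intro CollectI exI[of _ "\<lambda>\<beta>. \<Sum>\<alpha>\<in>I n. Gam \<beta> \<alpha> (comp I C n \<alpha> x)"]) simp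
qed

lemma Psi_in_chains: "x \<in> chains I C n \<Longrightarrow> Ps n x \<in> chains I C n"
  using Psi_in mchains_sub by (rule subsetD[rotated])

lemma mchainsE:
  assumes "x \<in> mchains I C M n"
  obtains f where "\<forall>\<alpha>\<in>I n. f \<alpha> \<in> C \<alpha>" "\<forall>\<alpha>\<in>I n. \<alpha> \<notin> U \<longrightarrow> f \<alpha> = 0" "x = sum f (I n)"
proof -
  obtain g where g: "x = sum g (I n \<inter> U)" "\<forall>\<alpha>\<in>I n \<inter> U. g \<alpha> \<in> C \<alpha>"
    using assms unfolding mchains_def chains_def by blast
  let ?f = "\<lambda>\<alpha>. if \<alpha> \<in> U then g \<alpha> else 0"
  have h1: "x = sum ?f (I n)" unfolding g(1) using finI by (simp add: sum.If_cases Int_commute)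
  have h2: "\<forall>\<alpha>\<in>I n. ?f \<alpha> \<in> C \<alpha>" using g(2) C0 by auto
  have h3: "\<forall>\<alpha>\<in>I n. \<alpha> \<notin> U \<longrightarrow> ?f \<alpha> = 0" by simp
  show ?thesis by (rule that[OF h2 h3 h1])
qed


lemma P1a:
  assumes "nfree I M n" "\<gamma> \<in> I n" "\<gamma> \<in> U" "\<beta> \<in> I n"
  shows "Gam \<beta> \<gamma> y = (if \<beta> = \<gamma> then y else 0)"
proof -
  have "(\<Sum>\<nu>\<in>{\<nu>. (\<gamma>, \<nu>) \<in> E}. Gam \<beta> \<nu> (st \<gamma> \<nu> y)) = 0"
  proof (rule sum.neutral, rule ballI)
    fix \<nu> assume "\<nu> \<in> {\<nu>. (\<gamma>, \<nu>) \<in> E}"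
    then have e: "(\<gamma>, \<nu>) \<in> E" by simp
    show "Gam \<beta> \<nu> (st \<gamma> \<nu> y) = 0"
      using E_cases[OF e]
    proof
      assume "\<exists>k. \<gamma> \<in> I (Suc k) \<and> \<nu> \<in> I k \<and> (\<gamma>, \<nu>) \<in> edges I C d \<and> (\<gamma>, \<nu>) \<notin> M"
      then obtain k where k: "\<gamma> \<in> I (Suc k)" "\<nu> \<in> I k" by blast
      then have "Suc k = n" using assms(2) inI_unique by blast
      then have "mp \<nu> \<beta> = {}" using mp_empty3[OF assms(1) k(2) _ assms(4)] by simp
      then show ?thesis by (rule Gamma_empty)
    next
      assume "\<exists>k. \<nu> \<in> I (Suc k) \<and> \<gamma> \<in> I k \<and> (\<nu>, \<gamma>) \<in> M"
      then have "\<gamma> \<in> Range M" by blast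
      then show ?thesis using assms(3) U_iff by blast
    qed
  qed
  then show ?thesis using Gamma_first[of \<beta> \<gamma> y] by auto
qed

lemma P1b:
  assumes "nfree I M n" "x \<in> mchains I C M n"
  shows "Ph n x = x"
proof -
  obtain f where f: "\<forall>\<alpha>\<in>I n. f \<alpha> \<in> C \<alpha>" "\<forall>\<alpha>\<in>I n. \<alpha> \<notin> U \<longrightarrow> f \<alpha> = 0" "x = sum f (I n)"
    using mchainsE[OF assms(2)] by blast
  have c: "comp I C n \<alpha> x = f \<alpha>" if "\<alpha> \<in> I n" for \<alpha> using comp_sum[OF f(1)] f(3) that by simp
  have "Ph n x = (\<Sum>\<alpha>\<in>I n \<inter> U. \<Sum>\<beta>\<in>I n. (if \<beta> = \<alpha> then f \<alpha> else 0))"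
    unfolding Phi_eq
    by (rule sum.cong[OF refl], rule sum.cong[OF refl]) (use c P1a[OF assms(1)] in auto)
  also have "\<dots> = (\<Sum>\<alpha>\<in>I n \<inter> U. f \<alpha>)"
    by (rule sum.cong[OF refl]) (simp add: finI)
  also have "\<dots> = (\<Sum>\<alpha>\<in>I n. f \<alpha>)"
    by (rule sum.mono_neutral_left) (use f(2) finI in auto)
  finally show ?thesis using f(3) by simp
qed

lemma P1c:
  assumes nf: "nfree I M n" and a: "\<alpha> \<in> I n" and x: "x \<in> C \<alpha>"
  shows "d (\<Sum>\<tau>\<in>I (Suc n). Gam \<tau> \<alpha> x) = (\<Sum>\<beta>\<in>I n \<inter> U. Gam \<beta> \<alpha> x) - x"
proof -
  have inch: "Gam \<tau> \<alpha> x \<in> chains I C (Suc n)" if "\<tau> \<in> I (Suc n)" for \<tau>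
    using C_sub_chains[OF that Gamma_in[OF x]] .
  have "d (\<Sum>\<tau>\<in>I (Suc n). Gam \<tau> \<alpha> x) = (\<Sum>\<tau>\<in>I (Suc n). d (Gam \<tau> \<alpha> x))"
    by (rule lin_on_sum[OF lin_d sub_chains inch])
  also have "\<dots> = (\<Sum>\<tau>\<in>I (Suc n). \<Sum>\<beta>\<in>I n. blk I C d \<beta> \<tau> (Gam \<tau> \<alpha> x))"
    by (rule sum.cong[OF refl]) (rule d_decomp[OF inch])
  also have "\<dots> = (\<Sum>\<beta>\<in>I n. \<Sum>\<tau>\<in>I (Suc n). blk I C d \<beta> \<tau> (Gam \<tau> \<alpha> x))"
    by (rule sum.swap)
  also have "\<dots> = (\<Sum>\<beta>\<in>I n. (if \<beta> \<in> U then Gam \<beta> \<alpha> x else 0) - (if \<beta> = \<alpha> then x else 0))"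
  proof (rule sum.cong[OF refl])
    fix \<beta> assume b: "\<beta> \<in> I n"
    have notDom: "\<beta> \<notin> Domain M"
    proof
      assume "\<beta> \<in> Domain M"
      then obtain \<nu> where "(\<beta>, \<nu>) \<in> M" by blast
      moreover obtain k where "\<beta> \<in> I (Suc k)" "\<nu> \<in> I k" using M_lev calculation by blast
      ultimately show False using nf b inI_unique unfolding nfree_def by blast
    qed
    let ?Nin = "{\<delta>. (\<delta>, \<beta>) \<in> E}"
    let ?T = "{\<tau> \<in> I (Suc n). (\<tau>, \<beta>) \<in> edges I C d \<and> (\<tau>, \<beta>) \<notin> M}"
    have NinT: "?Nin = ?T"
    proof (intro set_eqI iffI)
      fix \<delta> assume "\<delta> \<in> ?Nin"
      then have e: "(\<delta>, \<beta>) \<in> E" by simp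
      show "\<delta> \<in> ?T" using E_cases[OF e]
      proof
        assume "\<exists>k. \<delta> \<in> I (Suc k) \<and> \<beta> \<in> I k \<and> (\<delta>, \<beta>) \<in> edges I C d \<and> (\<delta>, \<beta>) \<notin> M"
        then obtain k where "\<delta> \<in> I (Suc k)" "\<beta> \<in> I k" "(\<delta>, \<beta>) \<in> edges I C d" "(\<delta>, \<beta>) \<notin> M" by blast
        moreover have "k = n" using calculation(2) b inI_unique by blast
        ultimately show ?thesis by simp
      next
        assume "\<exists>k. \<beta> \<in> I (Suc k) \<and> \<delta> \<in> I k \<and> (\<beta>, \<delta>) \<in> M"
        then show ?thesis using notDom by blast
      qed
    next
      fix \<delta> assume "\<delta> \<in> ?T"
      then show "\<delta> \<in> ?Nin" unfolding medges_def by simp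
    qed
    have stT: "st \<tau> \<beta> = blk I C d \<beta> \<tau>" if "\<tau> \<in> I (Suc n)" for \<tau>
    proof -
      have "(\<beta>, \<tau>) \<notin> M" using notDom by blast
      then show ?thesis by (simp add: fun_eq_iff st_ord)
    qed
    have GL: "Gam \<beta> \<alpha> x - (if \<beta> = \<alpha> then x else 0) = (\<Sum>\<tau>\<in>?T. blk I C d \<beta> \<tau> (Gam \<tau> \<alpha> x))"
      using Gamma_last[OF x, of \<beta>] unfolding NinT by (simp add: stT eq_commute[of \<alpha> \<beta>])
    have fT: "finite ?T" using finI by simp
    have split: "(\<Sum>\<tau>\<in>I (Suc n). blk I C d \<beta> \<tau> (Gam \<tau> \<alpha> x)) =
      (\<Sum>\<tau>\<in>?T. blk I C d \<beta> \<tau> (Gam \<tau> \<alpha> x)) + (\<Sum>\<tau>\<in>{\<tau> \<in> I (Suc n). (\<tau>, \<beta>) \<in> M}. blk I C d \<beta> \<tau> (Gam \<tau> \<alpha> x))"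
    proof -
      have "(\<Sum>\<tau>\<in>I (Suc n). blk I C d \<beta> \<tau> (Gam \<tau> \<alpha> x)) =
            (\<Sum>\<tau>\<in>{\<tau> \<in> I (Suc n). (\<tau>, \<beta>) \<in> edges I C d}. blk I C d \<beta> \<tau> (Gam \<tau> \<alpha> x))"
      proof (rule sum.mono_neutral_right[OF finI], blast, rule ballI)
        fix \<tau> assume "\<tau> \<in> I (Suc n) - {\<tau> \<in> I (Suc n). (\<tau>, \<beta>) \<in> edges I C d}"
        then show "blk I C d \<beta> \<tau> (Gam \<tau> \<alpha> x) = 0"
          using blk_zero_nonedge[OF _ _ b Gamma_in[OF x]] by blast
      qed
      also have "{\<tau> \<in> I (Suc n). (\<tau>, \<beta>) \<in> edges I C d} = ?T \<union> {\<tau> \<in> I (Suc n). (\<tau>, \<beta>) \<in> M}"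
        using M_edges by blast
      also have "(\<Sum>\<tau>\<in>?T \<union> {\<tau> \<in> I (Suc n). (\<tau>, \<beta>) \<in> M}. blk I C d \<beta> \<tau> (Gam \<tau> \<alpha> x)) =
        (\<Sum>\<tau>\<in>?T. blk I C d \<beta> \<tau> (Gam \<tau> \<alpha> x)) + (\<Sum>\<tau>\<in>{\<tau> \<in> I (Suc n). (\<tau>, \<beta>) \<in> M}. blk I C d \<beta> \<tau> (Gam \<tau> \<alpha> x))"
        by (rule sum.union_disjoint) (use finI in auto)
      finally show ?thesis .
    qed
    show "(\<Sum>\<tau>\<in>I (Suc n). blk I C d \<beta> \<tau> (Gam \<tau> \<alpha> x)) = (if \<beta> \<in> U then Gam \<beta> \<alpha> x else 0) - (if \<beta> = \<alpha> then x else 0)"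
    proof (cases "\<beta> \<in> U")
      case True
      then have e: "{\<tau> \<in> I (Suc n). (\<tau>, \<beta>) \<in> M} = {}" using U_iff by blast
      have s0: "(\<Sum>\<tau>\<in>{\<tau> \<in> I (Suc n). (\<tau>, \<beta>) \<in> M}. blk I C d \<beta> \<tau> (Gam \<tau> \<alpha> x)) = 0"
        unfolding e by simp
      show ?thesis using split GL True s0 by simp
    next
      case False
      then obtain \<tau>0 where t0: "(\<tau>0, \<beta>) \<in> M" using U_iff notDom by blast
      obtain k where k: "\<tau>0 \<in> I (Suc k)" "\<beta> \<in> I k" using M_lev[OF t0] by blast
      have "k = n" using k(2) b inI_unique by blast
      then have t0I: "\<tau>0 \<in> I (Suc n)" using k by simp
      have "{\<tau> \<in> I (Suc n). (\<tau>, \<beta>) \<in> M} = {\<tau>0}" using t0 t0I M_uniq2 by blast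
      then have s1: "(\<Sum>\<tau>\<in>{\<tau> \<in> I (Suc n). (\<tau>, \<beta>) \<in> M}. blk I C d \<beta> \<tau> (Gam \<tau> \<alpha> x)) = blk I C d \<beta> \<tau>0 (Gam \<tau>0 \<alpha> x)"
        by simp
      have G0: "Gam \<tau>0 \<alpha> x = - blk_inv I C d \<beta> \<tau>0 (Gam \<beta> \<alpha> x)"
      proof -
        have "Gam \<tau>0 \<alpha> x = (if \<alpha> = \<tau>0 then x else 0) + (\<Sum>\<delta>\<in>{\<delta>. (\<delta>, \<tau>0) \<in> E}. st \<delta> \<tau>0 (Gam \<delta> \<alpha> x))"
          by (rule Gamma_last[OF x])
        moreover have "\<alpha> \<noteq> \<tau>0"
        proof
          assume "\<alpha> = \<tau>0"
          then have "n = Suc n" using a t0I inI_unique by blast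
          then show False by simp
        qed
        moreover have "(\<Sum>\<delta>\<in>{\<delta>. (\<delta>, \<tau>0) \<in> E}. st \<delta> \<tau>0 (Gam \<delta> \<alpha> x)) = st \<beta> \<tau>0 (Gam \<beta> \<alpha> x)"
        proof -
          have bin: "\<beta> \<in> {\<delta>. (\<delta>, \<tau>0) \<in> E}" using t0 unfolding medges_def by blast
          have "(\<Sum>\<delta>\<in>{\<delta>. (\<delta>, \<tau>0) \<in> E}. st \<delta> \<tau>0 (Gam \<delta> \<alpha> x)) =
            st \<beta> \<tau>0 (Gam \<beta> \<alpha> x) + (\<Sum>\<delta>\<in>{\<delta>. (\<delta>, \<tau>0) \<in> E} - {\<beta>}. st \<delta> \<tau>0 (Gam \<delta> \<alpha> x))"
            by (rule sum.remove[OF Nin_finite bin])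
          moreover have "(\<Sum>\<delta>\<in>{\<delta>. (\<delta>, \<tau>0) \<in> E} - {\<beta>}. st \<delta> \<tau>0 (Gam \<delta> \<alpha> x)) = 0"
          proof (rule sum.neutral, rule ballI)
            fix \<delta> assume "\<delta> \<in> {\<delta>. (\<delta>, \<tau>0) \<in> E} - {\<beta>}"
            then have e: "(\<delta>, \<tau>0) \<in> E" and ne: "\<delta> \<noteq> \<beta>" by auto
            show "st \<delta> \<tau>0 (Gam \<delta> \<alpha> x) = 0"
              using E_cases[OF e]
            proof
              assume "\<exists>k. \<delta> \<in> I (Suc k) \<and> \<tau>0 \<in> I k \<and> (\<delta>, \<tau>0) \<in> edges I C d \<and> (\<delta>, \<tau>0) \<notin> M"
              then obtain k where k: "\<delta> \<in> I (Suc k)" "\<tau>0 \<in> I k" by blast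
              then have "k = Suc n" using t0I inI_unique by blast
              then have "mp \<alpha> \<delta> = {}" using mp_empty1[OF a] k by simp
              then show ?thesis using st_0[OF e] Gamma_empty by simp
            next
              assume "\<exists>k. \<tau>0 \<in> I (Suc k) \<and> \<delta> \<in> I k \<and> (\<tau>0, \<delta>) \<in> M"
              then have "(\<tau>0, \<delta>) \<in> M" by blast
              then show ?thesis using M_uniq1[OF t0] ne by simp
            qed
          qed
          ultimately show ?thesis by simp
        qed
        ultimately show ?thesis using st_rev[OF t0] by simp
      qed
      have bl: "blk I C d \<beta> \<tau>0 (Gam \<tau>0 \<alpha> x) = - Gam \<beta> \<alpha> x"
      proof -
        have gi: "Gam \<beta> \<alpha> x \<in> C \<beta>" by (rule Gamma_in[OF x])
        have "blk I C d \<beta> \<tau>0 (Gam \<tau>0 \<alpha> x) = - blk I C d \<beta> \<tau>0 (blk_inv I C d \<beta> \<tau>0 (Gam \<beta> \<alpha> x))"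
          unfolding G0 using lin_on_neg[OF blk_lin[OF k(1) k(2)]] blk_inv_prop[OF t0 gi] by simp
        then show ?thesis using blk_inv_prop[OF t0 gi] by simp
      qed
      show ?thesis unfolding split s1 GL[symmetric] bl using False by simp
    qed
  qed
  also have "\<dots> = (\<Sum>\<beta>\<in>I n. if \<beta> \<in> U then Gam \<beta> \<alpha> x else 0) - (\<Sum>\<beta>\<in>I n. if \<beta> = \<alpha> then x else 0)"
    by (rule sum_subtractf)
  also have "(\<Sum>\<beta>\<in>I n. if \<beta> \<in> U then Gam \<beta> \<alpha> x else 0) = (\<Sum>\<beta>\<in>I n \<inter> U. Gam \<beta> \<alpha> x)"
    using finI by (simp add: sum.If_cases Int_commute)
  also have "(\<Sum>\<beta>\<in>I n. if \<beta> = \<alpha> then x else 0) = x"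
    using finI a by simp
  finally show ?thesis .
qed

end

context MC begin

lemma adj_d:
  "adj (chains I C (Suc n)) d y \<in> chains I C (Suc n) \<and>
   (\<forall>a\<in>chains I C (Suc n). inner (d a) y = inner a (adj (chains I C (Suc n)) d y))"
proof -
  obtain G where G: "finite G" "chains I C (Suc n) = span G" using chains_span by blast
  show ?thesis unfolding G(2) by (rule adj_prop[OF G(1)]) (use lin_d[of "Suc n"] G(2) in simp)
qed

lemma P1d:
  assumes nf: "nfree I M n" and s: "s \<in> chains I C n"
  shows "Ph n (Ps n s) - s = d (\<Sum>\<alpha>\<in>I n. \<Sum>\<tau>\<in>I (Suc n). Gam \<tau> \<alpha> (comp I C n \<alpha> s))"
    and "(\<Sum>\<alpha>\<in>I n. \<Sum>\<tau>\<in>I (Suc n). Gam \<tau> \<alpha> (comp I C n \<alpha> s)) \<in> chains I C (Suc n)"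
proof -
  have inch: "(\<Sum>\<tau>\<in>I (Suc n). Gam \<tau> \<alpha> (comp I C n \<alpha> s)) \<in> chains I C (Suc n)" for \<alpha>
    by (rule chains_sum, rule C_sub_chains, assumption, rule Gamma_in, rule comp_in[OF s])
  then show "(\<Sum>\<alpha>\<in>I n. \<Sum>\<tau>\<in>I (Suc n). Gam \<tau> \<alpha> (comp I C n \<alpha> s)) \<in> chains I C (Suc n)"
    by (rule chains_sum)
  have "Ph n (Ps n s) = Ps n s" by (rule P1b[OF nf Psi_in[OF s]])
  also have "\<dots> = (\<Sum>\<alpha>\<in>I n. \<Sum>\<beta>\<in>I n \<inter> U. Gam \<beta> \<alpha> (comp I C n \<alpha> s))" by (rule Psi_eq)
  finally have e1: "Ph n (Ps n s) - s = (\<Sum>\<alpha>\<in>I n. (\<Sum>\<beta>\<in>I n \<inter> U. Gam \<beta> \<alpha> (comp I C n \<alpha> s)) - comp I C n \<alpha> s)"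
    using comp_recon[OF s] by (simp add: sum_subtractf)
  have "d (\<Sum>\<alpha>\<in>I n. \<Sum>\<tau>\<in>I (Suc n). Gam \<tau> \<alpha> (comp I C n \<alpha> s)) = (\<Sum>\<alpha>\<in>I n. d (\<Sum>\<tau>\<in>I (Suc n). Gam \<tau> \<alpha> (comp I C n \<alpha> s)))"
    by (rule lin_on_sum[OF lin_d sub_chains inch])
  also have "\<dots> = (\<Sum>\<alpha>\<in>I n. (\<Sum>\<beta>\<in>I n \<inter> U. Gam \<beta> \<alpha> (comp I C n \<alpha> s)) - comp I C n \<alpha> s)"
    by (rule sum.cong[OF refl], rule P1c[OF nf _ comp_in[OF s]])
  finally show "Ph n (Ps n s) - s = d (\<Sum>\<alpha>\<in>I n. \<Sum>\<tau>\<in>I (Suc n). Gam \<tau> \<alpha> (comp I C n \<alpha> s))"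
    using e1 by simp
qed

lemma cond1_free:
  assumes nf: "nfree I M n" and s: "s \<in> chains I C n"
  shows "oproj {x\<in>chains I C n. adj (chains I C (Suc n)) d x = 0} (Ph n (Ps n s) - s) = 0"
proof (rule oproj_zero)
  let ?A = "adj (chains I C (Suc n)) d"
  have A0: "?A 0 = 0"
  proof -
    have "?A 0 \<in> chains I C (Suc n)" "\<forall>a\<in>chains I C (Suc n). inner (d a) 0 = inner a (?A 0)"
      using adj_d by blast+
    then have "inner (?A 0) (?A 0) = 0" by simp
    then show ?thesis by simp
  qed
  show "0 \<in> {x \<in> chains I C n. ?A x = 0}" using chains_0 A0 by simp
  show "\<forall>w\<in>{x \<in> chains I C n. ?A x = 0}. inner (Ph n (Ps n s) - s) w = 0"
  proof
    fix w assume "w \<in> {x \<in> chains I C n. ?A x = 0}"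
    then have w: "?A w = 0" by simp
    let ?H = "\<Sum>\<alpha>\<in>I n. \<Sum>\<tau>\<in>I (Suc n). Gam \<tau> \<alpha> (comp I C n \<alpha> s)"
    have "inner (Ph n (Ps n s) - s) w = inner (d ?H) w" using P1d(1)[OF nf s] by simp
    also have "\<dots> = inner ?H (?A w)" using adj_d P1d(2)[OF nf s] by blast
    finally show "inner (Ph n (Ps n s) - s) w = 0" using w by simp
  qed
qed

end

context MC begin

definition hh :: "nat \<Rightarrow> 'v \<Rightarrow> 'v" where
  "hh k y = (\<Sum>\<nu>\<in>I k. \<Sum>\<beta>\<in>I (Suc k). Gam \<beta> \<nu> (comp I C k \<nu> y))"

lemma hh_lin: "lin_on (chains I C k) (hh k)"
proof -
  have "lin_on (chains I C k) (\<lambda>y. \<Sum>\<nu>\<in>I k. (\<lambda>z. \<Sum>\<beta>\<in>I (Suc k). Gam \<beta> \<nu> z) (comp I C k \<nu> y))"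
  proof (rule lin_on_sum_fun)
    fix \<nu> show "lin_on (chains I C k) (\<lambda>y. (\<lambda>z. \<Sum>\<beta>\<in>I (Suc k). Gam \<beta> \<nu> z) (comp I C k \<nu> y))"
      by (rule lin_on_comp[OF comp_lin comp_in]) (auto intro: lin_on_sum_fun Gamma_lin)
  qed
  then show ?thesis unfolding hh_def by simp
qed

lemma notRange_free:
  assumes "nfree I M (Suc m)" "\<alpha> \<in> I m"
  shows "\<alpha> \<notin> Range M"
proof
  assume "\<alpha> \<in> Range M"
  then obtain \<tau> where t: "(\<tau>, \<alpha>) \<in> M" by blast
  then obtain k where k: "\<tau> \<in> I (Suc k)" "\<alpha> \<in> I k" using M_lev by blast
  then have "k = m" using assms(2) inI_unique by blast
  then show False using assms(1) t k unfolding nfree_def by blast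
qed

lemma P2a:
  assumes nf: "nfree I M (Suc m)" and a: "\<alpha> \<in> I m" and gI: "\<gamma> \<in> I m" and g: "\<gamma> \<in> U" and x: "x \<in> C \<alpha>"
  shows "Gam \<gamma> \<alpha> x = (if \<gamma> = \<alpha> then x else 0)"
proof -
  have "(\<Sum>\<delta>\<in>{\<delta>. (\<delta>, \<gamma>) \<in> E}. st \<delta> \<gamma> (Gam \<delta> \<alpha> x)) = 0"
  proof (rule sum.neutral, rule ballI)
    fix \<delta> assume "\<delta> \<in> {\<delta>. (\<delta>, \<gamma>) \<in> E}"
    then have e: "(\<delta>, \<gamma>) \<in> E" by simp
    show "st \<delta> \<gamma> (Gam \<delta> \<alpha> x) = 0"
      using E_cases[OF e]
    proof
      assume "\<exists>k. \<delta> \<in> I (Suc k) \<and> \<gamma> \<in> I k \<and> (\<delta>, \<gamma>) \<in> edges I C d \<and> (\<delta>, \<gamma>) \<notin> M"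
      then obtain k where k: "\<delta> \<in> I (Suc k)" "\<gamma> \<in> I k" by blast
      then have "k = m" using gI inI_unique by blast
      then have "mp \<alpha> \<delta> = {}" using mp_empty3[OF nf a _ ] k by simp
      then show ?thesis using Gamma_empty st_0[OF e] by simp
    next
      assume "\<exists>k. \<gamma> \<in> I (Suc k) \<and> \<delta> \<in> I k \<and> (\<gamma>, \<delta>) \<in> M"
      then have "\<gamma> \<in> Domain M" by blast
      then show ?thesis using g U_iff by blast
    qed
  qed
  then show ?thesis using Gamma_last[OF x, of \<gamma>] by auto
qed

lemma P2b:
  assumes nf: "nfree I M (Suc m)" and a: "\<alpha> \<in> I m" and x: "x \<in> C \<alpha>"
  shows "Ps m x = (if \<alpha> \<in> U then x else 0)"
proof -
  have "Ps m x = (\<Sum>\<alpha>'\<in>I m. if \<alpha>' = \<alpha> then (\<Sum>\<gamma>\<in>I m \<inter> U. Gam \<gamma> \<alpha> x) else 0)"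
    unfolding Psi_eq
  proof (rule sum.cong[OF refl])
    fix \<alpha>' assume "\<alpha>' \<in> I m"
    show "(\<Sum>\<gamma>\<in>I m \<inter> U. Gam \<gamma> \<alpha>' (comp I C m \<alpha>' x)) = (if \<alpha>' = \<alpha> then (\<Sum>\<gamma>\<in>I m \<inter> U. Gam \<gamma> \<alpha> x) else 0)"
      using comp_single[OF a x, of \<alpha>'] by (simp add: Gamma_0)
  qed
  also have "\<dots> = (\<Sum>\<gamma>\<in>I m \<inter> U. Gam \<gamma> \<alpha> x)" using a finI by simp
  also have "\<dots> = (\<Sum>\<gamma>\<in>I m \<inter> U. if \<gamma> = \<alpha> then x else 0)"
    by (rule sum.cong[OF refl]) (use P2a[OF nf a _ _ x] in blast)
  also have "\<dots> = (if \<alpha> \<in> U then x else 0)" using a finI by (simp add: sum.delta)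
  finally show ?thesis .
qed

lemma P2c:
  assumes a: "\<alpha> \<in> I m" "\<alpha> \<in> U" and x: "x \<in> C \<alpha>"
  shows "Ph m x = (\<Sum>\<beta>\<in>I m. Gam \<beta> \<alpha> x)"
proof -
  have "Ph m x = (\<Sum>\<alpha>'\<in>I m \<inter> U. if \<alpha>' = \<alpha> then (\<Sum>\<beta>\<in>I m. Gam \<beta> \<alpha> x) else 0)"
    unfolding Phi_eq
  proof (rule sum.cong[OF refl])
    fix \<alpha>' assume "\<alpha>' \<in> I m \<inter> U"
    show "(\<Sum>\<beta>\<in>I m. Gam \<beta> \<alpha>' (comp I C m \<alpha>' x)) = (if \<alpha>' = \<alpha> then (\<Sum>\<beta>\<in>I m. Gam \<beta> \<alpha> x) else 0)"
      using comp_single[OF a(1) x, of \<alpha>'] by (simp add: Gamma_0)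
  qed
  also have "\<dots> = (\<Sum>\<beta>\<in>I m. Gam \<beta> \<alpha> x)" using a finI by simp
  finally show ?thesis .
qed

lemma Phi_0: "Ph m 0 = 0" using lin_on_0[OF Phi_lin chains_0] .

lemma P2d:
  assumes a: "\<alpha> \<in> I m" "\<alpha> \<in> U" and x: "x \<in> C \<alpha>"
  shows "(\<Sum>\<beta>\<in>I m. Gam \<beta> \<alpha> x) = x + (\<Sum>\<beta>\<in>I m. \<Sum>\<nu>\<in>{\<nu>. (\<alpha>, \<nu>) \<in> E}. Gam \<beta> \<nu> (blk I C d \<nu> \<alpha> x))"
proof -
  have st: "st \<alpha> \<nu> x = blk I C d \<nu> \<alpha> x" for \<nu>
  proof -
    have "(\<nu>, \<alpha>) \<notin> M" using a(2) U_iff by blast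
    then show ?thesis by (rule st_ord)
  qed
  have "(\<Sum>\<beta>\<in>I m. Gam \<beta> \<alpha> x) = (\<Sum>\<beta>\<in>I m. (if \<alpha> = \<beta> then x else 0) + (\<Sum>\<nu>\<in>{\<nu>. (\<alpha>, \<nu>) \<in> E}. Gam \<beta> \<nu> (blk I C d \<nu> \<alpha> x)))"
    by (rule sum.cong[OF refl]) (simp add: Gamma_first[of _ \<alpha> x] st)
  also have "\<dots> = (\<Sum>\<beta>\<in>I m. (if \<alpha> = \<beta> then x else 0)) + (\<Sum>\<beta>\<in>I m. \<Sum>\<nu>\<in>{\<nu>. (\<alpha>, \<nu>) \<in> E}. Gam \<beta> \<nu> (blk I C d \<nu> \<alpha> x))"
    by (rule sum.distrib)
  also have "(\<Sum>\<beta>\<in>I m. (if \<alpha> = \<beta> then x else 0)) = x" using a finI by simp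
  finally show ?thesis .
qed

lemma P2e:
  assumes a: "\<alpha> \<in> I (Suc k)" "\<alpha> \<in> U" and x: "x \<in> C \<alpha>"
  shows "(\<Sum>\<beta>\<in>I (Suc k). \<Sum>\<nu>\<in>{\<nu>. (\<alpha>, \<nu>) \<in> E}. Gam \<beta> \<nu> (blk I C d \<nu> \<alpha> x)) = hh k (d x)"
proof -
  have Nsub: "{\<nu>. (\<alpha>, \<nu>) \<in> E} \<subseteq> I k"
  proof
    fix \<nu> assume "\<nu> \<in> {\<nu>. (\<alpha>, \<nu>) \<in> E}"
    then have e: "(\<alpha>, \<nu>) \<in> E" by simp
    show "\<nu> \<in> I k"
      using E_cases[OF e]
    proof
      assume "\<exists>k'. \<alpha> \<in> I (Suc k') \<and> \<nu> \<in> I k' \<and> (\<alpha>, \<nu>) \<in> edges I C d \<and> (\<alpha>, \<nu>) \<notin> M"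
      then obtain k' where "\<alpha> \<in> I (Suc k')" "\<nu> \<in> I k'" by blast
      moreover have "Suc k' = Suc k" using calculation(1) a(1) inI_unique by blast
      ultimately show ?thesis by simp
    next
      assume "\<exists>k'. \<nu> \<in> I (Suc k') \<and> \<alpha> \<in> I k' \<and> (\<nu>, \<alpha>) \<in> M"
      then have "\<alpha> \<in> Range M" by blast
      then show ?thesis using a(2) U_iff by blast
    qed
  qed
  have dx: "d x \<in> chains I C k" using d_chains C_sub_chains[OF a(1) x] by blast
  have "hh k (d x) = (\<Sum>\<nu>\<in>I k. \<Sum>\<beta>\<in>I (Suc k). Gam \<beta> \<nu> (blk I C d \<nu> \<alpha> x))"
    unfolding hh_def by (rule sum.cong[OF refl]) (simp add: blk_eq)
  also have "\<dots> = (\<Sum>\<nu>\<in>{\<nu>. (\<alpha>, \<nu>) \<in> E}. \<Sum>\<beta>\<in>I (Suc k). Gam \<beta> \<nu> (blk I C d \<nu> \<alpha> x))"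
  proof (rule sum.mono_neutral_right[OF finI Nsub], rule ballI)
    fix \<nu> assume nu: "\<nu> \<in> I k - {\<nu>. (\<alpha>, \<nu>) \<in> E}"
    have "(\<alpha>, \<nu>) \<notin> edges I C d"
    proof
      assume "(\<alpha>, \<nu>) \<in> edges I C d"
      moreover have "(\<alpha>, \<nu>) \<notin> M" using a(2) U_iff by blast
      ultimately have "(\<alpha>, \<nu>) \<in> E" unfolding medges_def by blast
      then show False using nu by simp
    qed
    then have "blk I C d \<nu> \<alpha> x = 0" using blk_zero_nonedge a(1) nu x by blast
    then show "(\<Sum>\<beta>\<in>I (Suc k). Gam \<beta> \<nu> (blk I C d \<nu> \<alpha> x)) = 0" by (simp add: Gamma_0)
  qed
  also have "\<dots> = (\<Sum>\<beta>\<in>I (Suc k). \<Sum>\<nu>\<in>{\<nu>. (\<alpha>, \<nu>) \<in> E}. Gam \<beta> \<nu> (blk I C d \<nu> \<alpha> x))"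
    by (rule sum.swap)
  finally show ?thesis by simp
qed

lemma P2f:
  assumes nf: "nfree I M (Suc 0)" and a: "\<alpha> \<in> I 0"
  shows "\<alpha> \<in> U" "{\<nu>. (\<alpha>, \<nu>) \<in> E} = {}"
proof -
  have nD: "\<alpha> \<notin> Domain M"
  proof
    assume "\<alpha> \<in> Domain M"
    then obtain \<nu> where "(\<alpha>, \<nu>) \<in> M" by blast
    then obtain k where "\<alpha> \<in> I (Suc k)" using M_lev by blast
    then show False using a inI_unique by fastforce
  qed
  show "\<alpha> \<in> U" using nD notRange_free[OF nf a] U_iff by blast
  show "{\<nu>. (\<alpha>, \<nu>) \<in> E} = {}"
  proof (rule equals0I)
    fix \<nu> assume "\<nu> \<in> {\<nu>. (\<alpha>, \<nu>) \<in> E}"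
    then have e: "(\<alpha>, \<nu>) \<in> E" by simp
    show False
      using E_cases[OF e]
    proof
      assume "\<exists>k. \<alpha> \<in> I (Suc k) \<and> \<nu> \<in> I k \<and> (\<alpha>, \<nu>) \<in> edges I C d \<and> (\<alpha>, \<nu>) \<notin> M"
      then obtain k where "\<alpha> \<in> I (Suc k)" by blast
      then have "Suc k = 0" using a inI_unique by blast
      then show False by simp
    next
      assume "\<exists>k. \<nu> \<in> I (Suc k) \<and> \<alpha> \<in> I k \<and> (\<nu>, \<alpha>) \<in> M"
      then have "\<alpha> \<in> Range M" by blast
      then show False using notRange_free[OF nf a] by blast
    qed
  qed
qed

end

context MC begin

lemma P2g:
  assumes a: "\<alpha> \<in> I (Suc k)" and M0: "(\<alpha>, \<nu>0) \<in> M" and x: "x \<in> C \<alpha>"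
  shows "hh k (d x) = - x"
proof -
  obtain k' where k': "\<alpha> \<in> I (Suc k')" "\<nu>0 \<in> I k'" using M_lev[OF M0] by blast
  have "k' = k" using k'(1) a inI_unique by blast
  then have n0: "\<nu>0 \<in> I k" using k' by simp
  have aR: "\<alpha> \<notin> Range M" using DR_disj M0 by blast
  have claim: "(\<Sum>\<nu>\<in>I k. Gam \<beta> \<nu> (blk I C d \<nu> \<alpha> x)) = - (if \<alpha> = \<beta> then x else 0)"
    if b: "\<beta> \<in> I (Suc k)" for \<beta>
  proof -
    let ?F = "\<lambda>\<nu>. Gam \<beta> \<nu> (blk I C d \<nu> \<alpha> x)"
    have s1: "(\<Sum>\<nu>\<in>I k. ?F \<nu>) = ?F \<nu>0 + (\<Sum>\<nu>\<in>I k - {\<nu>0}. ?F \<nu>)"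
      by (rule sum.remove[OF finI n0])
    have F0: "?F \<nu>0 = - Gam \<beta> \<alpha> x"
    proof -
      let ?y = "blk I C d \<nu>0 \<alpha> x"
      have ne: "\<nu>0 \<noteq> \<beta>"
      proof
        assume "\<nu>0 = \<beta>" then have "k = Suc k" using n0 b inI_unique by blast
        then show False by simp
      qed
      have ain: "\<alpha> \<in> {\<mu>. (\<nu>0, \<mu>) \<in> E}" using M0 unfolding medges_def by blast
      have "(\<Sum>\<mu>\<in>{\<mu>. (\<nu>0, \<mu>) \<in> E}. Gam \<beta> \<mu> (st \<nu>0 \<mu> ?y)) =
            Gam \<beta> \<alpha> (st \<nu>0 \<alpha> ?y) + (\<Sum>\<mu>\<in>{\<mu>. (\<nu>0, \<mu>) \<in> E} - {\<alpha>}. Gam \<beta> \<mu> (st \<nu>0 \<mu> ?y))"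
        by (rule sum.remove[OF Nout_finite ain])
      moreover have "(\<Sum>\<mu>\<in>{\<mu>. (\<nu>0, \<mu>) \<in> E} - {\<alpha>}. Gam \<beta> \<mu> (st \<nu>0 \<mu> ?y)) = 0"
      proof (rule sum.neutral, rule ballI)
        fix \<mu> assume "\<mu> \<in> {\<mu>. (\<nu>0, \<mu>) \<in> E} - {\<alpha>}"
        then have e: "(\<nu>0, \<mu>) \<in> E" and mne: "\<mu> \<noteq> \<alpha>" by auto
        show "Gam \<beta> \<mu> (st \<nu>0 \<mu> ?y) = 0"
          using E_cases[OF e]
        proof
          assume "\<exists>j. \<nu>0 \<in> I (Suc j) \<and> \<mu> \<in> I j \<and> (\<nu>0, \<mu>) \<in> edges I C d \<and> (\<nu>0, \<mu>) \<notin> M"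
          then obtain j where j: "\<nu>0 \<in> I (Suc j)" "\<mu> \<in> I j" by blast
          then have "Suc j = k" using n0 inI_unique by blast
          then have "mp \<mu> \<beta> = {}" using mp_empty1[OF j(2)] b by simp
          then show ?thesis by (rule Gamma_empty)
        next
          assume "\<exists>j. \<mu> \<in> I (Suc j) \<and> \<nu>0 \<in> I j \<and> (\<mu>, \<nu>0) \<in> M"
          then have "(\<mu>, \<nu>0) \<in> M" by blast
          then show ?thesis using M_uniq2[OF M0] mne by simp
        qed
      qed
      moreover have "st \<nu>0 \<alpha> ?y = - x" using st_rev[OF M0] blk_inv_blk[OF M0 x] by simp
      ultimately have "Gam \<beta> \<nu>0 ?y = Gam \<beta> \<alpha> (- x)" using Gamma_first[of \<beta> \<nu>0 ?y] ne by simp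
      then show ?thesis using Gamma_neg[OF x] by simp
    qed
    have Nout_eq: "{\<nu>. (\<alpha>, \<nu>) \<in> E} = {\<nu> \<in> I k - {\<nu>0}. (\<alpha>, \<nu>) \<in> edges I C d}"
    proof (intro set_eqI iffI)
      fix \<nu> assume "\<nu> \<in> {\<nu>. (\<alpha>, \<nu>) \<in> E}"
      then have e: "(\<alpha>, \<nu>) \<in> E" by simp
      show "\<nu> \<in> {\<nu> \<in> I k - {\<nu>0}. (\<alpha>, \<nu>) \<in> edges I C d}"
        using E_cases[OF e]
      proof
        assume "\<exists>j. \<alpha> \<in> I (Suc j) \<and> \<nu> \<in> I j \<and> (\<alpha>, \<nu>) \<in> edges I C d \<and> (\<alpha>, \<nu>) \<notin> M"
        then obtain j where j: "\<alpha> \<in> I (Suc j)" "\<nu> \<in> I j" "(\<alpha>, \<nu>) \<in> edges I C d" "(\<alpha>, \<nu>) \<notin> M" by blast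
        then have "Suc j = Suc k" using a inI_unique by blast
        moreover have "\<nu> \<noteq> \<nu>0" using j(4) M0 by blast
        ultimately show ?thesis using j by simp
      next
        assume "\<exists>j. \<nu> \<in> I (Suc j) \<and> \<alpha> \<in> I j \<and> (\<nu>, \<alpha>) \<in> M"
        then have "\<alpha> \<in> Range M" by blast
        then show ?thesis using aR by blast
      qed
    next
      fix \<nu> assume nu: "\<nu> \<in> {\<nu> \<in> I k - {\<nu>0}. (\<alpha>, \<nu>) \<in> edges I C d}"
      then have "(\<alpha>, \<nu>) \<notin> M" using M_uniq1[OF M0] by blast
      then show "\<nu> \<in> {\<nu>. (\<alpha>, \<nu>) \<in> E}" using nu unfolding medges_def by blast
    qed
    have st: "st \<alpha> \<nu> x = blk I C d \<nu> \<alpha> x" for \<nu>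
    proof -
      have "(\<nu>, \<alpha>) \<notin> M" using aR by blast
      then show ?thesis by (rule st_ord)
    qed
    have "(\<Sum>\<nu>\<in>I k - {\<nu>0}. ?F \<nu>) = (\<Sum>\<nu>\<in>{\<nu> \<in> I k - {\<nu>0}. (\<alpha>, \<nu>) \<in> edges I C d}. ?F \<nu>)"
    proof (rule sum.mono_neutral_right, simp add: finI, blast, rule ballI)
      fix \<nu> assume nu: "\<nu> \<in> I k - {\<nu>0} - {\<nu> \<in> I k - {\<nu>0}. (\<alpha>, \<nu>) \<in> edges I C d}"
      then have "blk I C d \<nu> \<alpha> x = 0" using blk_zero_nonedge a x by blast
      then show "?F \<nu> = 0" by (simp add: Gamma_0)
    qed
    also have "\<dots> = (\<Sum>\<nu>\<in>{\<nu>. (\<alpha>, \<nu>) \<in> E}. Gam \<beta> \<nu> (st \<alpha> \<nu> x))"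
      unfolding Nout_eq by (simp add: st)
    also have "\<dots> = Gam \<beta> \<alpha> x - (if \<alpha> = \<beta> then x else 0)"
      using Gamma_first[of \<beta> \<alpha> x] by simp
    finally show ?thesis using s1 F0 by simp
  qed
  have "hh k (d x) = (\<Sum>\<nu>\<in>I k. \<Sum>\<beta>\<in>I (Suc k). Gam \<beta> \<nu> (blk I C d \<nu> \<alpha> x))"
    unfolding hh_def by (rule sum.cong[OF refl]) (simp add: blk_eq)
  also have "\<dots> = (\<Sum>\<beta>\<in>I (Suc k). \<Sum>\<nu>\<in>I k. Gam \<beta> \<nu> (blk I C d \<nu> \<alpha> x))"
    by (rule sum.swap)
  also have "\<dots> = (\<Sum>\<beta>\<in>I (Suc k). - (if \<alpha> = \<beta> then x else 0))"
    by (rule sum.cong[OF refl]) (rule claim)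
  also have "\<dots> = - x" using a finI by (simp add: sum_negf)
  finally show ?thesis .
qed

lemma P2h:
  assumes nf: "nfree I M (Suc m)" and w: "w \<in> chains I C m" and dw: "d w = 0"
  shows "Ph m (Ps m w) = w"
proof -
  let ?w = "\<lambda>\<alpha>. comp I C m \<alpha> w"
  have wa: "?w \<alpha> \<in> C \<alpha>" for \<alpha> by (rule comp_in[OF w])
  have wach: "\<alpha> \<in> I m \<Longrightarrow> ?w \<alpha> \<in> chains I C m" for \<alpha> using C_sub_chains wa by blast
  have "Ps m w = (\<Sum>\<alpha>\<in>I m. Ps m (?w \<alpha>))"
    by (subst comp_recon[OF w], rule lin_on_sum[OF Psi_lin sub_chains wach])
  then have "Ph m (Ps m w) = (\<Sum>\<alpha>\<in>I m. Ph m (Ps m (?w \<alpha>)))"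
    using lin_on_sum[OF Phi_lin sub_chains, of "I m" "\<lambda>\<alpha>. Ps m (?w \<alpha>)"] Psi_in_chains[OF wach] by simp
  also have "\<dots> = w"
  proof (cases m)
    case 0
    have "Ph m (Ps m (?w \<alpha>)) = ?w \<alpha>" if a: "\<alpha> \<in> I m" for \<alpha>
    proof -
      have a0: "\<alpha> \<in> I 0" using a 0 by simp
      have nf0: "nfree I M (Suc 0)" using nf 0 by simp
      note f = P2f[OF nf0 a0]
      have "Ps m (?w \<alpha>) = ?w \<alpha>" using P2b[OF nf a wa] f(1) by simp
      moreover have "Ph m (?w \<alpha>) = ?w \<alpha>" using P2c[OF a f(1) wa] P2d[OF a f(1) wa] f(2) by simp
      ultimately show ?thesis by simp
    qed
    then have "(\<Sum>\<alpha>\<in>I m. Ph m (Ps m (?w \<alpha>))) = (\<Sum>\<alpha>\<in>I m. ?w \<alpha>)" by simp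
    then show ?thesis using comp_recon[OF w] by simp
  next
    case (Suc k)
    have per: "Ph m (Ps m (?w \<alpha>)) = ?w \<alpha> + hh k (d (?w \<alpha>))" if a: "\<alpha> \<in> I m" for \<alpha>
    proof (cases "\<alpha> \<in> U")
      case True
      have a': "\<alpha> \<in> I (Suc k)" using a Suc by simp
      have "Ps m (?w \<alpha>) = ?w \<alpha>" using P2b[OF nf a wa] True by simp
      moreover have "Ph m (?w \<alpha>) = ?w \<alpha> + hh k (d (?w \<alpha>))"
        using P2c[OF a True wa] P2d[OF a True wa] P2e[OF a' True wa] Suc by simp
      ultimately show ?thesis by simp
    next
      case False
      have a': "\<alpha> \<in> I (Suc k)" using a Suc by simp
      have "\<alpha> \<in> Domain M" using False U_iff notRange_free[OF nf a] by blast
      then obtain \<nu>0 where M0: "(\<alpha>, \<nu>0) \<in> M" by blast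
      have "Ps m (?w \<alpha>) = 0" using P2b[OF nf a wa] False by simp
      then have "Ph m (Ps m (?w \<alpha>)) = 0" using Phi_0 by simp
      moreover have "hh k (d (?w \<alpha>)) = - ?w \<alpha>" by (rule P2g[OF a' M0 wa])
      ultimately show ?thesis by simp
    qed
    have dch: "\<alpha> \<in> I m \<Longrightarrow> d (?w \<alpha>) \<in> chains I C k" for \<alpha> using d_chains wach Suc by blast
    have "(\<Sum>\<alpha>\<in>I m. Ph m (Ps m (?w \<alpha>))) = (\<Sum>\<alpha>\<in>I m. ?w \<alpha>) + (\<Sum>\<alpha>\<in>I m. hh k (d (?w \<alpha>)))"
      using per by (simp add: sum.distrib)
    also have "(\<Sum>\<alpha>\<in>I m. hh k (d (?w \<alpha>))) = hh k (\<Sum>\<alpha>\<in>I m. d (?w \<alpha>))"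
      by (rule lin_on_sum[OF hh_lin sub_chains dch, symmetric])
    also have "(\<Sum>\<alpha>\<in>I m. d (?w \<alpha>)) = d w"
      by (subst (2) comp_recon[OF w], rule lin_on_sum[OF lin_d sub_chains wach, symmetric])
    also have "hh k (d w) = 0" using dw lin_on_0[OF hh_lin chains_0] by simp
    finally show ?thesis using comp_recon[OF w] by simp
  qed
  finally show ?thesis .
qed

lemma cond2_free:
  assumes nf: "nfree I M (Suc m)" and s: "s \<in> chains I C m"
  shows "oproj {x\<in>chains I C m. d x = 0} (adj (chains I C m) (Ps m) (adj (mchains I C M m) (Ph m) s) - s) = 0"
proof (rule oproj_zero)
  show "0 \<in> {x\<in>chains I C m. d x = 0}" using chains_0 d0 by simp
  obtain G1 where G1: "finite G1" "mchains I C M m = span G1" using mchains_span by blast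
  obtain G2 where G2: "finite G2" "chains I C m = span G2" using chains_span by blast
  let ?z = "adj (mchains I C M m) (Ph m) s"
  let ?y = "adj (chains I C m) (Ps m) ?z"
  have z: "?z \<in> mchains I C M m" "\<forall>a\<in>mchains I C M m. inner (Ph m a) s = inner a ?z"
  proof -
    have "lin_on (span G1) (Ph m)" using lin_on_subset[OF Phi_lin[of m] mchains_sub[of m]] G1(2) by simp
    from adj_prop[OF G1(1) this, of s]
    show "?z \<in> mchains I C M m" "\<forall>a\<in>mchains I C M m. inner (Ph m a) s = inner a ?z"
      unfolding G1(2) by simp_all
  qed
  have y: "\<forall>a\<in>chains I C m. inner (Ps m a) ?z = inner a ?y"
  proof -
    have "lin_on (span G2) (Ps m)" using Psi_lin[of m] G2(2) by simp
    from adj_prop[OF G2(1) this, of ?z] show ?thesis unfolding G2(2) by simp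
  qed
  show "\<forall>w\<in>{x\<in>chains I C m. d x = 0}. inner (?y - s) w = 0"
  proof
    fix w assume "w \<in> {x\<in>chains I C m. d x = 0}"
    then have w: "w \<in> chains I C m" "d w = 0" by auto
    have "inner ?y w = inner w ?y" by (rule inner_commute)
    also have "\<dots> = inner (Ps m w) ?z" using y w(1) by simp
    also have "\<dots> = inner (Ph m (Ps m w)) s" using z(2) Psi_in[OF w(1)] by simp
    also have "\<dots> = inner w s" using P2h[OF nf w] by simp
    also have "\<dots> = inner s w" by (rule inner_commute)
    finally have "inner ?y w = inner s w" .
    then show "inner (?y - s) w = 0" by (simp only: inner_diff_left)
  qed
qed

end

context MC begin

lemma Q1:
  assumes g: "\<gamma> \<in> I (Suc m)" "\<gamma> \<in> U" and M0: "(\<alpha>0, \<beta>0) \<in> M" and a0: "\<alpha>0 \<in> I (Suc m)" and b0: "\<beta>0 \<in> I m"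
    and v: "v \<in> C \<gamma>"
  shows "(\<Sum>\<delta>\<in>I (Suc m). blk I C d \<beta>0 \<delta> (Gam \<delta> \<gamma> v)) = 0"
proof -
  let ?F = "\<lambda>\<delta>. blk I C d \<beta>0 \<delta> (Gam \<delta> \<gamma> v)"
  have s1: "(\<Sum>\<delta>\<in>I (Suc m). ?F \<delta>) = ?F \<alpha>0 + (\<Sum>\<delta>\<in>I (Suc m) - {\<alpha>0}. ?F \<delta>)"
    by (rule sum.remove[OF finI a0])
  have gR: "\<gamma> \<notin> Range M" "\<gamma> \<notin> Domain M" using g(2) U_iff by auto
  have G0: "Gam \<alpha>0 \<gamma> v = - blk_inv I C d \<beta>0 \<alpha>0 (Gam \<beta>0 \<gamma> v)"
  proof -
    have ne: "\<gamma> \<noteq> \<alpha>0" using gR M0 by blast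
    have bin: "\<beta>0 \<in> {\<delta>. (\<delta>, \<alpha>0) \<in> E}" using M0 unfolding medges_def by blast
    have "(\<Sum>\<delta>\<in>{\<delta>. (\<delta>, \<alpha>0) \<in> E}. st \<delta> \<alpha>0 (Gam \<delta> \<gamma> v)) =
          st \<beta>0 \<alpha>0 (Gam \<beta>0 \<gamma> v) + (\<Sum>\<delta>\<in>{\<delta>. (\<delta>, \<alpha>0) \<in> E} - {\<beta>0}. st \<delta> \<alpha>0 (Gam \<delta> \<gamma> v))"
      by (rule sum.remove[OF Nin_finite bin])
    moreover have "(\<Sum>\<delta>\<in>{\<delta>. (\<delta>, \<alpha>0) \<in> E} - {\<beta>0}. st \<delta> \<alpha>0 (Gam \<delta> \<gamma> v)) = 0"
    proof (rule sum.neutral, rule ballI)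
      fix \<delta> assume "\<delta> \<in> {\<delta>. (\<delta>, \<alpha>0) \<in> E} - {\<beta>0}"
      then have e: "(\<delta>, \<alpha>0) \<in> E" and dne: "\<delta> \<noteq> \<beta>0" by auto
      show "st \<delta> \<alpha>0 (Gam \<delta> \<gamma> v) = 0"
        using E_cases[OF e]
      proof
        assume "\<exists>k. \<delta> \<in> I (Suc k) \<and> \<alpha>0 \<in> I k \<and> (\<delta>, \<alpha>0) \<in> edges I C d \<and> (\<delta>, \<alpha>0) \<notin> M"
        then obtain k where k: "\<delta> \<in> I (Suc k)" "\<alpha>0 \<in> I k" by blast
        then have "k = Suc m" using a0 inI_unique by blast
        then have "mp \<gamma> \<delta> = {}" using mp_empty2[OF g(1) gR(1)] k by simp
        then show ?thesis using Gamma_empty st_0[OF e] by simp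
      next
        assume "\<exists>k. \<alpha>0 \<in> I (Suc k) \<and> \<delta> \<in> I k \<and> (\<alpha>0, \<delta>) \<in> M"
        then have "(\<alpha>0, \<delta>) \<in> M" by blast
        then show ?thesis using M_uniq1[OF M0] dne by simp
      qed
    qed
    ultimately show ?thesis using Gamma_last[OF v, of \<alpha>0] ne st_rev[OF M0] by simp
  qed
  have F0: "?F \<alpha>0 = - Gam \<beta>0 \<gamma> v"
  proof -
    have gi: "Gam \<beta>0 \<gamma> v \<in> C \<beta>0" by (rule Gamma_in[OF v])
    have "?F \<alpha>0 = - blk I C d \<beta>0 \<alpha>0 (blk_inv I C d \<beta>0 \<alpha>0 (Gam \<beta>0 \<gamma> v))"
      unfolding G0 using lin_on_neg[OF blk_lin[OF a0 b0]] blk_inv_prop[OF M0 gi] by simp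
    then show ?thesis using blk_inv_prop[OF M0 gi] by simp
  qed
  have b0D: "\<beta>0 \<notin> Domain M" using M_chain M0 by blast
  have Nin_eq: "{\<delta>. (\<delta>, \<beta>0) \<in> E} = {\<delta> \<in> I (Suc m) - {\<alpha>0}. (\<delta>, \<beta>0) \<in> edges I C d}"
  proof (intro set_eqI iffI)
    fix \<delta> assume "\<delta> \<in> {\<delta>. (\<delta>, \<beta>0) \<in> E}"
    then have e: "(\<delta>, \<beta>0) \<in> E" by simp
    show "\<delta> \<in> {\<delta> \<in> I (Suc m) - {\<alpha>0}. (\<delta>, \<beta>0) \<in> edges I C d}"
      using E_cases[OF e]
    proof
      assume "\<exists>k. \<delta> \<in> I (Suc k) \<and> \<beta>0 \<in> I k \<and> (\<delta>, \<beta>0) \<in> edges I C d \<and> (\<delta>, \<beta>0) \<notin> M"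
      then obtain k where k: "\<delta> \<in> I (Suc k)" "\<beta>0 \<in> I k" "(\<delta>, \<beta>0) \<in> edges I C d" "(\<delta>, \<beta>0) \<notin> M" by blast
      then have "k = m" using b0 inI_unique by blast
      moreover have "\<delta> \<noteq> \<alpha>0" using k(4) M0 by blast
      ultimately show ?thesis using k by simp
    next
      assume "\<exists>k. \<beta>0 \<in> I (Suc k) \<and> \<delta> \<in> I k \<and> (\<beta>0, \<delta>) \<in> M"
      then show ?thesis using b0D by blast
    qed
  next
    fix \<delta> assume dl: "\<delta> \<in> {\<delta> \<in> I (Suc m) - {\<alpha>0}. (\<delta>, \<beta>0) \<in> edges I C d}"
    then have "(\<delta>, \<beta>0) \<notin> M" using M_uniq2[OF M0] by blast
    then show "\<delta> \<in> {\<delta>. (\<delta>, \<beta>0) \<in> E}" using dl unfolding medges_def by blast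
  qed
  have stb: "st \<delta> \<beta>0 y = blk I C d \<beta>0 \<delta> y" for \<delta> y
  proof -
    have "(\<beta>0, \<delta>) \<notin> M" using b0D by blast
    then show ?thesis by (rule st_ord)
  qed
  have "(\<Sum>\<delta>\<in>I (Suc m) - {\<alpha>0}. ?F \<delta>) = (\<Sum>\<delta>\<in>{\<delta> \<in> I (Suc m) - {\<alpha>0}. (\<delta>, \<beta>0) \<in> edges I C d}. ?F \<delta>)"
  proof (rule sum.mono_neutral_right, simp add: finI, blast, rule ballI)
    fix \<delta> assume dl: "\<delta> \<in> I (Suc m) - {\<alpha>0} - {\<delta> \<in> I (Suc m) - {\<alpha>0}. (\<delta>, \<beta>0) \<in> edges I C d}"
    show "?F \<delta> = 0" by (rule blk_zero_nonedge[OF _ _ b0 Gamma_in[OF v]]) (use dl in auto)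
  qed
  also have "\<dots> = (\<Sum>\<delta>\<in>{\<delta>. (\<delta>, \<beta>0) \<in> E}. st \<delta> \<beta>0 (Gam \<delta> \<gamma> v))"
    unfolding Nin_eq by (simp add: stb)
  also have "\<dots> = Gam \<beta>0 \<gamma> v"
  proof -
    have "\<gamma> \<noteq> \<beta>0"
    proof
      assume "\<gamma> = \<beta>0" then have "Suc m = m" using g(1) b0 inI_unique by blast
      then show False by simp
    qed
    then show ?thesis using Gamma_last[OF v, of \<beta>0] by simp
  qed
  finally show ?thesis using s1 F0 by simp
qed

lemma Q2:
  assumes M0: "(\<alpha>0, \<beta>0) \<in> M" and a0: "\<alpha>0 \<in> I (Suc m)" and b0: "\<beta>0 \<in> I m" and x: "x \<in> chains I C (Suc m)"
  shows "comp I C m \<beta>0 (d (Ph (Suc m) x)) = 0"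
proof -
  let ?S = "\<lambda>\<gamma>. \<Sum>\<delta>\<in>I (Suc m). Gam \<delta> \<gamma> (comp I C (Suc m) \<gamma> x)"
  have gin: "Gam \<delta> \<gamma> (comp I C (Suc m) \<gamma> x) \<in> chains I C (Suc m)" if "\<delta> \<in> I (Suc m)" for \<delta> \<gamma>
    by (rule C_sub_chains[OF that Gamma_in[OF comp_in[OF x]]])
  have Sin: "?S \<gamma> \<in> chains I C (Suc m)" for \<gamma> by (rule chains_sum[OF gin])
  have dS: "d (?S \<gamma>) \<in> chains I C m" for \<gamma> by (rule d_chains[OF Sin])
  have "d (Ph (Suc m) x) = (\<Sum>\<gamma>\<in>I (Suc m) \<inter> U. d (?S \<gamma>))"
    unfolding Phi_eq by (rule lin_on_sum[OF lin_d sub_chains Sin])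
  then have "comp I C m \<beta>0 (d (Ph (Suc m) x)) = (\<Sum>\<gamma>\<in>I (Suc m) \<inter> U. comp I C m \<beta>0 (d (?S \<gamma>)))"
    using lin_on_sum[OF comp_lin sub_chains dS] by simp
  also have "\<dots> = 0"
  proof (rule sum.neutral, rule ballI)
    fix \<gamma> assume g: "\<gamma> \<in> I (Suc m) \<inter> U"
    let ?v = "comp I C (Suc m) \<gamma> x"
    have "d (?S \<gamma>) = (\<Sum>\<delta>\<in>I (Suc m). d (Gam \<delta> \<gamma> ?v))"
      by (rule lin_on_sum[OF lin_d sub_chains gin])
    then have "comp I C m \<beta>0 (d (?S \<gamma>)) = (\<Sum>\<delta>\<in>I (Suc m). comp I C m \<beta>0 (d (Gam \<delta> \<gamma> ?v)))"
      using lin_on_sum[OF comp_lin sub_chains d_chains[OF gin]] by simp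
    also have "\<dots> = (\<Sum>\<delta>\<in>I (Suc m). blk I C d \<beta>0 \<delta> (Gam \<delta> \<gamma> ?v))"
      using blk_eq[OF b0] by simp
    also have "\<dots> = 0" using Q1[OF _ _ M0 a0 b0 comp_in[OF x]] g by blast
    finally show "comp I C m \<beta>0 (d (?S \<gamma>)) = 0" .
  qed
  finally show ?thesis .
qed

lemma not_free_fail:
  assumes M0: "(\<alpha>0, \<beta>0) \<in> M" and a0: "\<alpha>0 \<in> I (Suc m)" and b0: "\<beta>0 \<in> I m"
  shows "\<exists>s\<in>chains I C (Suc m).
     oproj {x\<in>chains I C (Suc m). adj (chains I C (Suc (Suc m))) d x = 0}
       (Ph (Suc m) (Ps (Suc m) s) - s) \<noteq> 0"
proof -
  let ?n = "Suc m"
  obtain s where s: "s \<in> C \<alpha>0" "blk I C d \<beta>0 \<alpha>0 s \<noteq> 0"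
    using M_edges M0 unfolding edges_def by blast
  have sc: "s \<in> chains I C ?n" by (rule C_sub_chains[OF a0 s(1)])
  define y where "y = Ph ?n (Ps ?n s) - s"
  have PPs: "Ph ?n (Ps ?n s) \<in> chains I C ?n"
  proof -
    have ps: "Ps ?n s \<in> chains I C ?n" by (rule Psi_in_chains[OF sc])
    show ?thesis
      unfolding Phi_eq by (rule chains_sum, rule chains_sum, rule C_sub_chains, assumption, rule Gamma_in, rule comp_in[OF ps])
  qed
  have yc: "y \<in> chains I C ?n" unfolding y_def by (rule chains_diff[OF PPs sc])
  have dy: "d y = d (Ph ?n (Ps ?n s)) - d s" unfolding y_def by (rule lin_on_diff[OF lin_d sub_chains PPs sc])
  have cdy: "comp I C m \<beta>0 (d y) = - blk I C d \<beta>0 \<alpha>0 s"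
  proof -
    have "comp I C m \<beta>0 (d y) = comp I C m \<beta>0 (d (Ph ?n (Ps ?n s))) - comp I C m \<beta>0 (d s)"
      unfolding dy by (rule lin_on_diff[OF comp_lin sub_chains d_chains[OF PPs] d_chains[OF sc]])
    also have "comp I C m \<beta>0 (d (Ph ?n (Ps ?n s))) = 0" by (rule Q2[OF M0 a0 b0 Psi_in_chains[OF sc]])
    also have "comp I C m \<beta>0 (d s) = blk I C d \<beta>0 \<alpha>0 s" using blk_eq[OF b0] by simp
    finally show ?thesis by simp
  qed
  let ?K = "{x\<in>chains I C ?n. adj (chains I C (Suc ?n)) d x = 0}"
  let ?A = "adj (chains I C (Suc ?n)) d"
  obtain G where G: "finite G" "chains I C (Suc ?n) = span G" using chains_span by blast
  have linG: "lin_on (span G) d" using lin_d[of "Suc ?n"] G(2) by simp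
  have Aprop: "?A w \<in> chains I C (Suc ?n) \<and> (\<forall>a\<in>chains I C (Suc ?n). inner (d a) w = inner a (?A w))" for w
    by (rule adj_d)
  have img: "d ` chains I C (Suc ?n) = span (d ` G)" unfolding G(2) by (rule lin_on_image_span[OF linG])
  obtain p where p: "p \<in> span (d ` G)" "\<forall>w\<in>span (d ` G). inner (y - p) w = 0"
    using proj_exists[of "d ` G" y] G(1) by blast
  obtain a where a: "a \<in> chains I C (Suc ?n)" "p = d a" using p(1) img[symmetric] by blast
  have pc: "p \<in> chains I C ?n" using a d_chains by blast
  define t where "t = y - p"
  have tc: "t \<in> chains I C ?n" unfolding t_def by (rule chains_diff[OF yc pc])
  have pK: "inner p w = 0" if "w \<in> ?K" for w
  proof -
    have "inner p w = inner a (?A w)" using a Aprop by simp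
    then show ?thesis using that by simp
  qed
  have tK: "t \<in> ?K"
  proof -
    let ?z = "?A t"
    have z: "?z \<in> chains I C (Suc ?n)" "inner (d ?z) t = inner ?z ?z" using Aprop by blast+
    have "d ?z \<in> span (d ` G)" using z(1) img by blast
    then have "inner t (d ?z) = 0" using p(2) t_def by simp
    then have "inner ?z ?z = 0" using z(2) by (simp add: inner_commute)
    then show ?thesis using tc by simp
  qed
  have oeq: "oproj ?K y = t"
  proof (rule oproj_eq[OF tK])
    show "\<forall>w\<in>?K. inner (y - t) w = 0" using pK t_def by simp
  next
    fix q assume q: "q \<in> ?K" "\<forall>w\<in>?K. inner (y - q) w = 0"
    have e1: "inner (y - q) t = 0" using q(2) tK by blast
    have e2: "inner (y - q) q = 0" using q by blast
    have e3: "inner p t = 0" using p(2)[rule_format, OF p(1)] t_def by (simp add: inner_commute)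
    have e4: "inner p q = 0" using pK[OF q(1)] .
    have tq: "t - q = (y - q) - p" using t_def by simp
    have "inner (t - q) (t - q) = inner (t - q) t - inner (t - q) q" by (simp add: inner_diff_right)
    also have "\<dots> = inner ((y - q) - p) t - inner ((y - q) - p) q" by (simp only: tq)
    also have "\<dots> = 0" using e1 e2 e3 e4 by (simp add: inner_diff_left)
    finally show "q = t" by simp
  qed
  have "oproj ?K (Ph ?n (Ps ?n s) - s) \<noteq> 0"
  proof
    assume "oproj ?K (Ph ?n (Ps ?n s) - s) = 0"
    then have "t = 0" using oeq y_def by simp
    then have "y = d a" using t_def a(2) by simp
    then have "d y = 0" using dd[OF a(1)] by simp
    then have "comp I C m \<beta>0 (d y) = 0" using lin_on_0[OF comp_lin chains_0] by simp
    then show False using cdy s(2) by simp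
  qed
  then show ?thesis using sc by blast
qed

theorem main_loc:
  "((\<forall>s\<in>chains I C n.
      oproj {x\<in>chains I C n. adj (chains I C (Suc n)) d x = 0} (Ph n (Ps n s) - s) = 0) \<and>
    (\<forall>m. n = Suc m \<longrightarrow>
      (\<forall>s\<in>chains I C m.
         oproj {x\<in>chains I C m. d x = 0}
           (adj (chains I C m) (Ps m) (adj (mchains I C M m) (Ph m) s) - s) = 0)))
   \<longleftrightarrow> nfree I M n"
proof
  assume nf: "nfree I M n"
  show "(\<forall>s\<in>chains I C n.
      oproj {x\<in>chains I C n. adj (chains I C (Suc n)) d x = 0} (Ph n (Ps n s) - s) = 0) \<and>
    (\<forall>m. n = Suc m \<longrightarrow>
      (\<forall>s\<in>chains I C m.
         oproj {x\<in>chains I C m. d x = 0}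
           (adj (chains I C m) (Ps m) (adj (mchains I C M m) (Ph m) s) - s) = 0))"
    using cond1_free[OF nf] cond2_free nf by blast
next
  assume c: "(\<forall>s\<in>chains I C n.
      oproj {x\<in>chains I C n. adj (chains I C (Suc n)) d x = 0} (Ph n (Ps n s) - s) = 0) \<and>
    (\<forall>m. n = Suc m \<longrightarrow>
      (\<forall>s\<in>chains I C m.
         oproj {x\<in>chains I C m. d x = 0}
           (adj (chains I C m) (Ps m) (adj (mchains I C M m) (Ph m) s) - s) = 0))"
  show "nfree I M n"
  proof (rule ccontr)
    assume "\<not> nfree I M n"
    then obtain \<alpha>0 \<beta>0 m where M0: "(\<alpha>0, \<beta>0) \<in> M" and n: "n = Suc m" and a0: "\<alpha>0 \<in> I n" and b0: "\<beta>0 \<in> I m"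
      unfolding nfree_def by blast
    have a0': "\<alpha>0 \<in> I (Suc m)" using a0 n by simp
    obtain s where s: "s \<in> chains I C (Suc m)"
      "oproj {x\<in>chains I C (Suc m). adj (chains I C (Suc (Suc m))) d x = 0} (Ph (Suc m) (Ps (Suc m) s) - s) \<noteq> 0"
      using not_free_fail[OF M0 a0' b0] by blast
    have "\<forall>s\<in>chains I C (Suc m).
      oproj {x\<in>chains I C (Suc m). adj (chains I C (Suc (Suc m))) d x = 0} (Ph (Suc m) (Ps (Suc m) s) - s) = 0"
      using c n by simp
    then show False using s by blast
  qed
qed

end

theorem mainTheorem2:
  fixes I :: "nat \<Rightarrow> 'c set" and C :: "'c \<Rightarrow> 'v::real_inner set" and d :: "'v \<Rightarrow> 'v"
    and M :: "('c \<times> 'c) set" and n :: nat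
  assumes "fin_based_complex I C d"
    and "morse_matching I C d M"
  shows "((\<forall>s\<in>chains I C n.
             oproj {x\<in>chains I C n. adj (chains I C (Suc n)) d x = 0}
               (Phi I C d M n (Psi I C d M n s) - s) = 0) \<and>
          (\<forall>m. n = Suc m \<longrightarrow>
             (\<forall>s\<in>chains I C m.
                oproj {x\<in>chains I C m. d x = 0}
                  (adj (chains I C m) (Psi I C d M m) (adj (mchains I C M m) (Phi I C d M m) s) - s) = 0)))
         \<longleftrightarrow> nfree I M n"
proof -
  interpret MC I C d M by unfold_locales (rule assms)+
  show ?thesis by (rule main_loc)
qed

end
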